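(* Let $k\ge 2$ be a fixed integer. There is a constant $C>0$ depending only on $k$ such that the following holds. Let $G$ be an undirected graph containing $t$ cycles of length $2k$, and let $A,B\subseteq V(G)$ (not necessarily disjoint). Then $$|E(A,B)| \leq C\left(|A|\cdot|B|^{1/k} + |B|\cdot|A|^{1/k} + t^{1/(2k)}\sqrt{|A|\cdot|B|}\right).$$
   Context: $E(A,B)$ denotes the set of edges of $G$ having one endpoint in $A$ and the other endpoint in $B$. A cycle of length $2k$ is a subgraph isomorphic to $C_{2k}$. *)

theory Defs
  imports Complex_Main
begin

definition simple_graph :: "'a set \<Rightarrow> 'a set set \<Rightarrow> bool" where
  "simple_graph V Es \<longleftrightarrow> finite V \<and> (\<forall>e\<in>Es. e \<subseteq> V \<and> card e = 2)"

definition edges_between :: "'a set set \<Rightarrow> 'a set \<Rightarrow> 'a set \<Rightarrow> 'a set set" where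
  "edges_between Es A B = {e \<in> Es. \<exists>u v. u \<in> A \<and> v \<in> B \<and> e = {u, v}}"

text \<open>Cycles of length L as subgraphs: identified by their edge sets
{f 0 f 1, f 1 f 2, ..., f (L-1) f 0} for L distinct vertices f 0..f (L-1).\<close>
definition cycles_of_length :: "'a set \<Rightarrow> 'a set set \<Rightarrow> nat \<Rightarrow> 'a set set set" where
  "cycles_of_length V Es L = {F. \<exists>f :: nat \<Rightarrow> 'a. inj_on f {0..<L} \<and> f ` {0..<L} \<subseteq> V \<and>
      (\<forall>i<L. {f i, f ((i + 1) mod L)} \<in> Es) \<and>
      F = (\<lambda>i. {f i, f ((i + 1) mod L)}) ` {0..<L}}"

end

theory Submission
  imports Defs "HOL-Analysis.Convex"
begin

definition walks :: "'a set \<Rightarrow> ('a \<Rightarrow> 'a \<Rightarrow> bool) \<Rightarrow> nat \<Rightarrow> 'a \<Rightarrow> 'a \<Rightarrow> 'a list set" where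
  "walks U R l u w = {xs. length xs = Suc l \<and> set xs \<subseteq> U \<and> xs!0 = u \<and> xs!l = w \<and>
      (\<forall>i<l. R (xs!i) (xs!Suc i))}"

lemma walks_finite: "finite U \<Longrightarrow> finite (walks U R l u w)"
  by (rule finite_subset[OF _ finite_lists_length_eq[of U "Suc l"]]) (auto simp: walks_def)

lemma walks_split_bij:
  "bij_betw (\<lambda>xs. (take (Suc a) xs, drop a xs))
     {xs\<in>walks U R (a+b) u w. xs!a = v \<and> P (take (Suc a) xs) \<and> Q (drop a xs)}
     ({ys\<in>walks U R a u v. P ys} \<times> {zs\<in>walks U R b v w. Q zs})"
proof (rule bij_betw_imageI)
  show "inj_on (\<lambda>xs. (take (Suc a) xs, drop a xs))
     {xs\<in>walks U R (a+b) u w. xs!a = v \<and> P (take (Suc a) xs) \<and> Q (drop a xs)}"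
  proof (rule inj_onI)
    fix xs ys
    assume "(take (Suc a) xs, drop a xs) = (take (Suc a) ys, drop a ys)"
    then have "take a (take (Suc a) xs) = take a (take (Suc a) ys)" "drop a xs = drop a ys" by auto
    then have "take a xs = take a ys" "drop a xs = drop a ys" by (auto simp: min_def)
    then show "xs = ys" by (metis append_take_drop_id)
  qed
next
  show "(\<lambda>xs. (take (Suc a) xs, drop a xs)) `
     {xs\<in>walks U R (a+b) u w. xs!a = v \<and> P (take (Suc a) xs) \<and> Q (drop a xs)} =
     ({ys\<in>walks U R a u v. P ys} \<times> {zs\<in>walks U R b v w. Q zs})"
  proof (intro equalityI subsetI)
    fix p assume "p \<in> (\<lambda>xs. (take (Suc a) xs, drop a xs)) `
     {xs\<in>walks U R (a+b) u w. xs!a = v \<and> P (take (Suc a) xs) \<and> Q (drop a xs)}"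
    then obtain xs where xs: "xs \<in> walks U R (a+b) u w" "xs!a = v" "P (take (Suc a) xs)" "Q (drop a xs)"
      and p: "p = (take (Suc a) xs, drop a xs)" by auto
    have len: "length xs = Suc (a+b)" using xs(1) by (simp add: walks_def)
    have s: "set xs \<subseteq> U" using xs(1) by (simp add: walks_def)
    have "take (Suc a) xs \<in> walks U R a u v"
      using xs len s set_take_subset[of "Suc a" xs] unfolding walks_def by auto
    moreover have "drop a xs \<in> walks U R b v w"
      using xs len s set_drop_subset[of a xs] unfolding walks_def
      by (auto simp: add.commute add.left_commute)
    ultimately show "p \<in> {ys\<in>walks U R a u v. P ys} \<times> {zs\<in>walks U R b v w. Q zs}"
      using xs p by auto
  next
    fix p assume "p \<in> {ys\<in>walks U R a u v. P ys} \<times> {zs\<in>walks U R b v w. Q zs}"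
    then obtain ys zs where p: "p = (ys, zs)" and ys: "ys \<in> walks U R a u v" "P ys"
      and zs: "zs \<in> walks U R b v w" "Q zs" by auto
    have ly: "length ys = Suc a" and lz: "length zs = Suc b" using ys zs by (auto simp: walks_def)
    define xs where "xs = ys @ tl zs"
    have lx: "length xs = Suc (a+b)" using ly lz by (simp add: xs_def)
    have tk: "take (Suc a) xs = ys" using ly by (simp add: xs_def)
    have zs_eq: "zs = v # tl zs" using zs lz by (cases zs) (auto simp: walks_def)
    have dr: "drop a xs = zs"
    proof -
      have "drop a xs = drop a ys @ tl zs" using ly by (simp add: xs_def)
      also have "drop a ys = [ys ! a]" using ly by (metis Suc_leI lessI diff_Suc_1 drop_eq_nths
          Cons_nth_drop_Suc drop_all le_refl)
      also have "ys ! a = v" using ys by (simp add: walks_def)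
      finally show ?thesis using zs_eq by simp
    qed
    have nth1: "xs ! i = ys ! i" if "i \<le> a" for i using that ly by (simp add: xs_def nth_append)
    have nth2: "xs ! (a + j) = zs ! j" if "j \<le> b" for j
    proof -
      have "xs ! (a + j) = drop a xs ! j" using lx that by simp
      then show ?thesis using dr by simp
    qed
    have "xs \<in> walks U R (a+b) u w"
      unfolding walks_def
    proof (intro CollectI conjI allI impI)
      show "length xs = Suc (a + b)" by (rule lx)
      show "set xs \<subseteq> U" using ys zs by (auto simp: xs_def walks_def dest: list.set_sel(2)[rotated])
      show "xs ! 0 = u" using nth1[of 0] ys by (simp add: walks_def)
      show "xs ! (a + b) = w" using nth2[of b] zs by (simp add: walks_def)
      fix i assume i: "i < a + b"
      show "R (xs ! i) (xs ! Suc i)"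
      proof (cases "i < a")
        case True
        then show ?thesis using nth1[of i] nth1[of "Suc i"] ys by (simp add: walks_def)
      next
        case False
        then obtain j where j: "i = a + j" "j < b" using i by (metis add_diff_inverse_nat nat_add_left_cancel_less)
        then show ?thesis using nth2[of j] nth2[of "Suc j"] zs by (simp add: walks_def)
      qed
    qed
    moreover have "xs ! a = v" using nth1[of a] ys by (simp add: walks_def)
    ultimately show "p \<in> (\<lambda>xs. (take (Suc a) xs, drop a xs)) `
     {xs\<in>walks U R (a+b) u w. xs!a = v \<and> P (take (Suc a) xs) \<and> Q (drop a xs)}"
      using p tk dr ys zs by (auto intro!: image_eqI[where x=xs])
  qed
qed

lemma walks_split_card:
  "card {xs\<in>walks U R (a+b) u w. xs!a = v \<and> P (take (Suc a) xs) \<and> Q (drop a xs)} =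
   card {ys\<in>walks U R a u v. P ys} * card {zs\<in>walks U R b v w. Q zs}"
  using bij_betw_same_card[OF walks_split_bij] by (simp add: card_cartesian_product)

lemma walks_split_sum:
  assumes "finite U"
  shows "card (walks U R (a+b) u w) = (\<Sum>v\<in>U. card (walks U R a u v) * card (walks U R b v w))"
proof -
  have eq: "walks U R (a+b) u w = (\<Union>v\<in>U. {xs\<in>walks U R (a+b) u w. xs!a = v \<and> True \<and> True})"
    apply (auto simp: walks_def)
    by (metis le_add1 le_imp_less_Suc nth_mem subsetD)
  have "card (walks U R (a+b) u w) = (\<Sum>v\<in>U. card {xs\<in>walks U R (a+b) u w. xs!a = v \<and> True \<and> True})"
    by (subst eq, rule card_UN_disjoint) (auto simp: assms walks_finite)
  also have "\<dots> = (\<Sum>v\<in>U. card (walks U R a u v) * card (walks U R b v w))"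
    by (rule sum.cong[OF refl], subst walks_split_card) simp
  finally show ?thesis .
qed


definition W :: "'a set \<Rightarrow> ('a \<Rightarrow> 'a \<Rightarrow> bool) \<Rightarrow> nat \<Rightarrow> 'a \<Rightarrow> 'a \<Rightarrow> real" where
  "W U R l u w = real (card (walks U R l u w))"

lemma W_nonneg: "W U R l u w \<ge> 0" by (simp add: W_def)

lemma W_split:
  "finite U \<Longrightarrow> W U R (a+b) u w = (\<Sum>v\<in>U. W U R a u v * W U R b v w)"
  unfolding W_def by (subst walks_split_sum) auto

lemma walks_0: "walks U R 0 u w = (if u = w \<and> u \<in> U then {[u]} else {})"
  by (auto simp: walks_def length_Suc_conv)

lemma W_0: "W U R 0 u w = (if u = w \<and> u \<in> U then 1 else 0)"
  by (auto simp: W_def walks_0)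

lemma walks_1: "walks U R (Suc 0) u w = (if u \<in> U \<and> w \<in> U \<and> R u w then {[u,w]} else {})"
  by (auto simp: walks_def length_Suc_conv)

lemma W_1: "W U R 1 u w = (if u \<in> U \<and> w \<in> U \<and> R u w then 1 else 0)"
  unfolding W_def One_nat_def walks_1 by auto

lemma W_1': "W U R (Suc 0) u w = (if u \<in> U \<and> w \<in> U \<and> R u w then 1 else 0)"
  unfolding W_def walks_1 by auto

lemma rev_walks:
  assumes sym: "symp R" and xs: "xs \<in> walks U R l u w"
  shows "rev xs \<in> walks U R l w u"
proof -
  have len: "length xs = Suc l" using xs by (simp add: walks_def)
  show ?thesis
    unfolding walks_def
  proof (intro CollectI conjI allI impI)
    show "length (rev xs) = Suc l" using len by simp
    show "set (rev xs) \<subseteq> U" using xs by (simp add: walks_def)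
    show "rev xs ! 0 = w" using xs len by (simp add: walks_def rev_nth)
    show "rev xs ! l = u" using xs len by (simp add: walks_def rev_nth)
    fix i assume i: "i < l"
    have "R (xs ! (l - Suc i)) (xs ! Suc (l - Suc i))" using xs i by (simp add: walks_def)
    moreover have "Suc (l - Suc i) = l - i" using i by simp
    ultimately have "R (xs ! (l - i)) (xs ! (l - Suc i))" using sym by (metis sympD)
    then show "R (rev xs ! i) (rev xs ! Suc i)" using len i by (simp add: rev_nth)
  qed
qed

lemma W_sym:
  assumes sym: "symp R"
  shows "W U R l u w = W U R l w u"
proof -
  have "rev ` walks U R l u w = walks U R l w u"
  proof
    show "rev ` walks U R l u w \<subseteq> walks U R l w u" using rev_walks[OF sym] by blast
    show "walks U R l w u \<subseteq> rev ` walks U R l u w"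
      using rev_walks[OF sym] by (metis image_eqI rev_rev_ident subsetI)
  qed
  then show ?thesis unfolding W_def by (metis card_image inj_on_def rev_rev_ident)
qed

lemma W_2_diag:
  assumes fin: "finite U" and sym: "symp R" and v: "v \<in> U"
  shows "W U R 2 v v = real (card {z\<in>U. R v z})"
proof -
  have "W U R 2 v v = W U R (1+1) v v" by (simp add: numeral_2_eq_2)
  also have "\<dots> = (\<Sum>z\<in>U. W U R 1 v z * W U R 1 z v)" by (rule W_split[OF fin])
  also have "\<dots> = (\<Sum>z\<in>U. if R v z then 1 else 0)"
    by (rule sum.cong) (use sym in \<open>auto simp: W_1 W_1' v dest: sympD\<close>)
  also have "\<dots> = real (card {z\<in>U. R v z})"
    using fin by (simp add: sum.If_cases Int_def conj_commute)
  finally show ?thesis .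
qed

lemma W_sq_sum:
  assumes fin: "finite U" and sym: "symp R"
  shows "(\<Sum>z\<in>U. (W U R p v z)\<^sup>2) = W U R (2*p) v v"
proof -
  have "W U R (2*p) v v = W U R (p+p) v v" by (simp add: mult_2)
  also have "\<dots> = (\<Sum>z\<in>U. W U R p v z * W U R p z v)" by (rule W_split[OF fin])
  also have "\<dots> = (\<Sum>z\<in>U. (W U R p v z)\<^sup>2)"
    by (rule sum.cong) (simp_all add: power2_eq_square W_sym[OF sym, of U p _ v])
  finally show ?thesis by simp
qed

lemma W_CS:
  assumes fin: "finite U" and sym: "symp R"
  shows "(W U R (p+q) u w)\<^sup>2 \<le> W U R (2*p) u u * W U R (2*q) w w"
proof -
  have "W U R (p+q) u w = (\<Sum>z\<in>U. W U R p u z * W U R q w z)"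
    by (subst W_split[OF fin]) (rule sum.cong, simp_all add: W_sym[OF sym, of U q _ w])
  then have "(W U R (p+q) u w)\<^sup>2 \<le> (\<Sum>z\<in>U. (W U R p u z)\<^sup>2) * (\<Sum>z\<in>U. (W U R q w z)\<^sup>2)"
    using Cauchy_Schwarz_ineq_sum by metis
  then show ?thesis using W_sq_sum[OF fin sym] by metis
qed

lemma walks_parity:
  assumes bip: "\<And>a b. R a b \<Longrightarrow> (a \<in> X \<longleftrightarrow> b \<notin> X)" and xs: "xs \<in> walks U R l u w"
  shows "i \<le> l \<Longrightarrow> (xs ! i \<in> X \<longleftrightarrow> (u \<in> X \<longleftrightarrow> even i))"
proof (induction i)
  case 0 then show ?case using xs by (simp add: walks_def)
next
  case (Suc i)
  then have "R (xs ! i) (xs ! Suc i)" using xs by (simp add: walks_def)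
  then show ?case using Suc bip by auto
qed

lemma W_odd_diag:
  assumes bip: "\<And>a b. R a b \<Longrightarrow> (a \<in> X \<longleftrightarrow> b \<notin> X)" and "odd l"
  shows "W U R l v v = 0"
proof -
  have "walks U R l v v = {}"
  proof (rule ccontr)
    assume "walks U R l v v \<noteq> {}"
    then obtain xs where xs: "xs \<in> walks U R l v v" by blast
    have "xs ! l = v" using xs by (simp add: walks_def)
    then show False using walks_parity[OF bip xs, of l] assms(2) by auto
  qed
  then show ?thesis by (simp add: W_def)
qed

lemma lc_zero:
  fixes b :: "nat \<Rightarrow> real"
  assumes nn: "\<And>s. b s \<ge> 0" and lc: "\<And>s. 1 \<le> s \<Longrightarrow> s < k \<Longrightarrow> (b s)\<^sup>2 \<le> b (s-1) * b (s+1)"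
    and b1: "b 1 = 0"
  shows "1 \<le> s \<Longrightarrow> s < k \<Longrightarrow> b s = 0"
proof (induction s rule: nat_induct_at_least)
  case base then show ?case using b1 by simp
next
  case (Suc s)
  have "(b (Suc s))\<^sup>2 \<le> b s * b (Suc s + 1)" using lc[of "Suc s"] Suc by simp
  then have "(b (Suc s))\<^sup>2 \<le> 0" using Suc by simp
  then show ?case by simp
qed

lemma lc_pos:
  fixes b :: "nat \<Rightarrow> real"
  assumes nn: "\<And>s. b s \<ge> 0" and lc: "\<And>s. 1 \<le> s \<Longrightarrow> s < k \<Longrightarrow> (b s)\<^sup>2 \<le> b (s-1) * b (s+1)"
    and b0: "b 0 = 1" and b1: "b 1 > 0"
  shows "s \<le> k \<Longrightarrow> b s > 0"
proof (induction s rule: less_induct)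
  case (less s)
  show ?case
  proof (cases "s \<le> 1")
    case True
    then have "s = 0 \<or> s = 1" by auto
    then show ?thesis using b0 b1 by auto
  next
    case False
    define r where "r = s - 2"
    have r: "s = Suc (Suc r)" using False by (simp add: r_def)
    have h1: "b (Suc r) > 0" using less r by auto
    have h0: "b r \<ge> 0" using nn by simp
    have "(b (Suc r))\<^sup>2 \<le> b r * b (Suc r + 1)" using lc[of "Suc r"] less r by simp
    moreover have "0 < (b (Suc r))\<^sup>2" using h1 by simp
    ultimately have "0 < b r * b s" using r by (metis Suc_eq_plus1 order_less_le_trans)
    then show ?thesis using h0 by (simp add: zero_less_mult_iff)
  qed
qed

lemma lc_mono:
  fixes b :: "nat \<Rightarrow> real"
  assumes pos: "\<And>s. s \<le> k \<Longrightarrow> b s > 0"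
    and lc: "\<And>s. 1 \<le> s \<Longrightarrow> s < k \<Longrightarrow> (b s)\<^sup>2 \<le> b (s-1) * b (s+1)"
    and s: "1 \<le> s"
  shows "s + d \<le> k \<Longrightarrow> b s * b (s + d - 1) \<le> b (s-1) * b (s + d)"
proof (induction d)
  case 0 then show ?case by simp
next
  case (Suc d)
  define t where "t = s + d"
  have t1: "1 \<le> t" "t < k" using Suc s by (auto simp: t_def)
  have IH: "b s * b (t - 1) \<le> b (s-1) * b t" using Suc by (simp add: t_def)
  have L: "(b t)\<^sup>2 \<le> b (t-1) * b (t+1)" using lc t1 by simp
  have p: "b (t-1) > 0" "b t > 0" "b s > 0" "b (s-1) > 0" "b (t+1) > 0" using pos t1 Suc by (auto simp: t_def)
  have "b s * b t * b (t-1) = (b s * b (t-1)) * b t" by simp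
  also have "\<dots> \<le> (b (s-1) * b t) * b t" using IH p by (simp add: mult_right_mono)
  also have "\<dots> = b (s-1) * (b t)\<^sup>2" by (simp add: power2_eq_square)
  also have "\<dots> \<le> b (s-1) * (b (t-1) * b (t+1))" using L p by (simp add: mult_left_mono)
  finally have "b s * b t * b (t-1) \<le> (b (s-1) * b (t+1)) * b (t-1)" by (simp add: ac_simps)
  then have "b s * b t \<le> b (s-1) * b (t+1)" using p(1) by (simp add: mult_le_cancel_right)
  then show ?case by (simp add: t_def)
qed

lemma lc_pair:
  fixes b :: "nat \<Rightarrow> real"
  assumes nn: "\<And>s. b s \<ge> 0" and lc: "\<And>s. 1 \<le> s \<Longrightarrow> s < k \<Longrightarrow> (b s)\<^sup>2 \<le> b (s-1) * b (s+1)"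
    and b0: "b 0 = 1" and s: "1 \<le> s" "s < k"
  shows "b s * b (k - s) \<le> b 1 * b (k - 1)"
proof (cases "b 1 = 0")
  case True
  have "b s = 0" using lc_zero[OF nn lc True] s by auto
  then show ?thesis using True by simp
next
  case False
  then have b1: "b 1 > 0" using nn[of 1] by simp
  have pos: "\<And>s. s \<le> k \<Longrightarrow> b s > 0" using lc_pos[OF nn lc b0 b1] by blast
  have half: "b j * b (k - j) \<le> b 1 * b (k - 1)" if "1 \<le> j" "2 * j \<le> k + 1" for j
    using that
  proof (induction j rule: nat_induct_at_least)
    case base then show ?case by simp
  next
    case (Suc j)
    have X: "b (Suc j) * b (Suc j + (k - 2*j - 1) - 1) \<le> b (Suc j - 1) * b (Suc j + (k - 2*j - 1))"
      by (rule lc_mono[OF pos lc]) (use Suc in auto)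
    have e1: "Suc j + (k - 2*j - 1) - 1 = k - Suc j" and e2: "Suc j + (k - 2*j - 1) = k - j"
      using Suc by auto
    from X e1 e2 have "b (Suc j) * b (k - Suc j) \<le> b j * b (k - j)" by (metis diff_Suc_1)
    then show ?case using Suc by simp
  qed
  show ?thesis
  proof (cases "2 * s \<le> k + 1")
    case True then show ?thesis using half s by simp
  next
    case False
    have "b (k - s) * b (k - (k - s)) \<le> b 1 * b (k - 1)" using half[of "k - s"] False s by simp
    then show ?thesis using s by (simp add: mult.commute)
  qed
qed

lemma lc_top:
  fixes b :: "nat \<Rightarrow> real"
  assumes nn: "\<And>s. b s \<ge> 0" and lc: "\<And>s. 1 \<le> s \<Longrightarrow> s < k \<Longrightarrow> (b s)\<^sup>2 \<le> b (s-1) * b (s+1)"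
    and b0: "b 0 = 1" and k: "k \<ge> 2"
  shows "b (k-1) ^ k \<le> b k ^ (k-1)"
proof (cases "b 1 = 0")
  case True
  have "b (k-1) = 0" using lc_zero[OF nn lc True, where s="k-1"] k by auto
  then show ?thesis using k nn[of k] by (simp add: power_0_left)
next
  case False
  then have b1: "b 1 > 0" using nn[of 1] by simp
  have pos: "\<And>s. s \<le> k \<Longrightarrow> b s > 0" using lc_pos[OF nn lc b0 b1] by blast
  have Q: "s + 1 \<le> k \<Longrightarrow> b s ^ (s+1) \<le> b (s+1) ^ s" for s
  proof (induction s)
    case 0 then show ?case using b0 by simp
  next
    case (Suc s)
    have L: "(b (Suc s))\<^sup>2 \<le> b s * b (Suc s + 1)" using lc[of "Suc s"] Suc by simp
    have p: "b s > 0" "b (Suc s) > 0" "b (Suc s + 1) > 0" using pos Suc by auto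
    have ee: "2 * (s+1) = s + (s+2)" by simp
    have "b (Suc s) ^ s * b (Suc s) ^ (s+2) = b (Suc s) ^ (2 * (s+1))" by (simp only: ee power_add)
    also have "b (Suc s) ^ (2 * (s+1)) = ((b (Suc s))\<^sup>2) ^ (s+1)" by (rule power_mult)
    also have "\<dots> \<le> (b s * b (Suc s + 1)) ^ (s+1)" by (rule power_mono) (use L p in auto)
    also have "\<dots> = b s ^ (s+1) * b (Suc s + 1) ^ (s+1)" by (simp add: power_mult_distrib)
    also have "\<dots> \<le> b (s+1) ^ s * b (Suc s + 1) ^ (s+1)"
      using Suc p by (simp add: mult_right_mono)
    finally have "b (Suc s) ^ s * b (Suc s) ^ (s+2) \<le> b (Suc s) ^ s * b (Suc s + 1) ^ (s+1)"
      by (simp add: mult.commute)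
    then show ?case using p by (simp add: mult_le_cancel_left)
  qed
  show ?thesis using Q[of "k-1"] k by simp
qed

lemma young_k:
  fixes x y z d :: real
  assumes "x \<ge> 0" "y \<ge> 0" "z \<ge> 0" "x ^ k \<le> z ^ (k-1)" "d > 0" "k \<ge> 2"
  shows "y * x \<le> d * z + y ^ k / d ^ (k-1)"
proof (cases "(y/d)^(k-1) \<le> x")
  case True
  have "(y * x) ^ (k-1) = (y/d)^(k-1) * d^(k-1) * x^(k-1)"
    using assms by (simp add: power_mult_distrib power_divide)
  also have "\<dots> \<le> x * d^(k-1) * x^(k-1)"
    using True assms by (simp add: mult_right_mono)
  also have "\<dots> = d^(k-1) * x^k"
  proof -
    have "x ^ k = x * x ^ (k-1)" using assms(6) by (cases k) auto
    then show ?thesis by simp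
  qed
  also have "\<dots> \<le> d^(k-1) * z^(k-1)" using assms by (simp add: mult_left_mono)
  also have "\<dots> = (d * z)^(k-1)" by (simp add: power_mult_distrib)
  finally have "(y * x) ^ Suc (k-2) \<le> (d * z) ^ Suc (k-2)"
    using assms(6) by (simp add: Suc_diff_Suc numeral_2_eq_2)
  then have "y * x \<le> d * z"
    by (rule power_le_imp_le_base) (use assms in simp)
  moreover have "y ^ k / d ^ (k-1) \<ge> 0" using assms by simp
  ultimately show ?thesis by linarith
next
  case False
  have "y * x \<le> y * (y/d)^(k-1)" using False assms by (simp add: mult_left_mono)
  also have "\<dots> = y ^ k / d^(k-1)"
  proof -
    have "y ^ k = y * y ^ (k-1)" using assms(6) by (cases k) auto
    then show ?thesis by (simp add: power_divide)
  qed
  moreover have "d * z \<ge> 0" using assms by simp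
  ultimately show ?thesis by linarith
qed



lemma walks_nth_in: "xs \<in> walks U R l u w \<Longrightarrow> i \<le> l \<Longrightarrow> xs ! i \<in> U"
  using nth_mem[of i xs] unfolding walks_def by auto

lemma walks_len: "xs \<in> walks U R l u w \<Longrightarrow> length xs = Suc l"
  unfolding walks_def by simp

lemma card_at:
  assumes fin: "finite U" and a: "a \<le> l"
  shows "card {xs\<in>walks U R l u w. xs!a = v \<and> Q (drop a xs)} =
         card (walks U R a u v) * card {zs\<in>walks U R (l-a) v w. Q zs}"
proof -
  have l: "l = a + (l - a)" using a by simp
  have "card {xs\<in>walks U R l u w. xs!a = v \<and> Q (drop a xs)} =
        card {xs\<in>walks U R (a + (l-a)) u w. xs!a = v \<and> (\<lambda>_. True) (take (Suc a) xs) \<and> Q (drop a xs)}"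
    using l by simp
  also have "\<dots> = card {ys\<in>walks U R a u v. (\<lambda>_. True) ys} * card {zs\<in>walks U R (l-a) v w. Q zs}"
    by (rule walks_split_card)
  finally show ?thesis by simp
qed

lemma pair_count:
  assumes fin: "finite U" and ij: "i < j" and jL: "j \<le> L"
  shows "real (card {xs\<in>walks U R L u u. xs!i = xs!j}) =
         (\<Sum>v\<in>U. W U R i u v * (W U R (j-i) v v * W U R (L-j) v u))"
proof -
  have eq: "{xs\<in>walks U R L u u. xs!i = xs!j} =
        (\<Union>v\<in>U. {xs\<in>walks U R L u u. xs!i = v \<and> (\<lambda>zs. zs!(j-i) = v) (drop i xs)})"
  proof (intro equalityI subsetI)
    fix xs assume xs: "xs \<in> {xs\<in>walks U R L u u. xs!i = xs!j}"
    have "xs ! i \<in> U" using xs ij jL walks_nth_in[of xs U R L u u i] by auto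
    moreover have "drop i xs ! (j - i) = xs ! j" using xs ij jL walks_len[of xs U R L u u] by simp
    ultimately show "xs \<in> (\<Union>v\<in>U. {xs\<in>walks U R L u u. xs!i = v \<and> (\<lambda>zs. zs!(j-i) = v) (drop i xs)})"
      using xs by auto
  next
    fix xs assume "xs \<in> (\<Union>v\<in>U. {xs\<in>walks U R L u u. xs!i = v \<and> (\<lambda>zs. zs!(j-i) = v) (drop i xs)})"
    moreover have "drop i xs ! (j - i) = xs ! j" if "xs \<in> walks U R L u u" for xs
      using that ij jL walks_len[of xs U R L u u] by simp
    ultimately show "xs \<in> {xs\<in>walks U R L u u. xs!i = xs!j}" by auto
  qed
  have "card {xs\<in>walks U R L u u. xs!i = xs!j} =
        (\<Sum>v\<in>U. card {xs\<in>walks U R L u u. xs!i = v \<and> (\<lambda>zs. zs!(j-i) = v) (drop i xs)})"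
    by (subst eq, rule card_UN_disjoint) (simp_all add: fin walks_finite, blast)
  also have "\<dots> = (\<Sum>v\<in>U. card (walks U R i u v) * card {zs\<in>walks U R (L-i) v u. zs!(j-i) = v})"
    by (rule sum.cong[OF refl], rule card_at) (use ij jL fin in auto)
  also have "\<dots> = (\<Sum>v\<in>U. card (walks U R i u v) * (card (walks U R (j-i) v v) * card (walks U R (L-j) v u)))"
  proof (rule sum.cong[OF refl])
    fix v
    have "card {zs\<in>walks U R (L-i) v u. zs!(j-i) = v} = card {zs\<in>walks U R (L-i) v u. zs!(j-i) = v \<and> (\<lambda>_. True) (drop (j-i) zs)}"
      by simp
    also have "\<dots> = card (walks U R (j-i) v v) * card {zs\<in>walks U R (L-i-(j-i)) v u. (\<lambda>_. True) zs}"
      by (rule card_at[where Q="\<lambda>_. True"]) (use ij jL fin in auto)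
    also have "L - i - (j - i) = L - j" using ij jL by simp
    finally show "card (walks U R i u v) * card {zs\<in>walks U R (L-i) v u. zs!(j-i) = v} =
       card (walks U R i u v) * (card (walks U R (j-i) v v) * card (walks U R (L-j) v u))" by simp
  qed
  finally show ?thesis by (simp add: W_def)
qed



lemma pair_sum:
  assumes fin: "finite U" and ij: "i < j" and jL: "j \<le> L"
  shows "(\<Sum>u\<in>U. real (card {xs\<in>walks U R L u u. xs!i = xs!j})) =
         (\<Sum>v\<in>U. W U R (j-i) v v * W U R (L-(j-i)) v v)"
proof -
  have "(\<Sum>u\<in>U. real (card {xs\<in>walks U R L u u. xs!i = xs!j})) =
        (\<Sum>u\<in>U. \<Sum>v\<in>U. W U R i u v * (W U R (j-i) v v * W U R (L-j) v u))"
    by (rule sum.cong[OF refl], rule pair_count) (use fin ij jL in auto)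
  also have "\<dots> = (\<Sum>v\<in>U. \<Sum>u\<in>U. W U R i u v * (W U R (j-i) v v * W U R (L-j) v u))"
    by (rule sum.swap)
  also have "\<dots> = (\<Sum>v\<in>U. W U R (j-i) v v * (\<Sum>u\<in>U. W U R (L-j) v u * W U R i u v))"
    by (simp add: sum_distrib_left ac_simps)
  also have "\<dots> = (\<Sum>v\<in>U. W U R (j-i) v v * W U R ((L-j) + i) v v)"
    by (simp add: W_split[OF fin])
  also have "\<dots> = (\<Sum>v\<in>U. W U R (j-i) v v * W U R (L-(j-i)) v v)"
    using ij jL by (simp add: Suc_diff_le)
  finally show ?thesis .
qed

lemma vertex_bound:
  assumes fin: "finite U" and sym: "symp R" and bip: "\<And>a b. R a b \<Longrightarrow> (a \<in> X \<longleftrightarrow> b \<notin> X)"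
    and v: "v \<in> U" and k: "k \<ge> 2" and r: "1 \<le> r" "r < 2*k" and d: "d > 0"
  shows "W U R r v v * W U R (2*k - r) v v \<le> d * W U R (2*k) v v + (W U R 2 v v) ^ k / d ^ (k-1)"
proof (cases "odd r")
  case True
  have "W U R r v v = 0" by (rule W_odd_diag[where X=X, OF bip True])
  moreover have "0 \<le> d * W U R (2*k) v v + (W U R 2 v v) ^ k / d ^ (k-1)"
    using d W_nonneg[of U R] by simp
  ultimately show ?thesis by simp
next
  case False
  then obtain s where s: "r = 2 * s" by (auto elim: evenE)
  define b where "b = (\<lambda>s. W U R (2*s) v v)"
  have nn: "\<And>s. b s \<ge> 0" by (simp add: b_def W_nonneg)
  have b0: "b 0 = 1" using v by (simp add: b_def W_0)
  have lc: "(b s)\<^sup>2 \<le> b (s-1) * b (s+1)" if "1 \<le> s" "s < k" for s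
  proof -
    have "(W U R ((s-1) + (s+1)) v v)\<^sup>2 \<le> W U R (2*(s-1)) v v * W U R (2*(s+1)) v v"
      by (rule W_CS[OF fin sym])
    moreover have "(s-1) + (s+1) = 2*s" using that by simp
    ultimately show ?thesis by (simp add: b_def mult_2)
  qed
  have s1: "1 \<le> s" "s < k" using r s by auto
  have "b s * b (k - s) \<le> b 1 * b (k-1)" by (rule lc_pair[OF nn lc b0 s1])
  also have "\<dots> \<le> d * b k + b 1 ^ k / d ^ (k-1)"
    using young_k[OF nn[of "k-1"] nn[of 1] nn[of k] lc_top[OF nn lc b0 k] d k] by (simp add: mult.commute)
  finally have "b s * b (k - s) \<le> d * b k + b 1 ^ k / d ^ (k-1)" .
  moreover have "2 * k - r = 2 * (k - s)" using s by simp
  ultimately show ?thesis by (simp add: b_def s)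
qed



definition pairsL :: "nat \<Rightarrow> (nat \<times> nat) set" where
  "pairsL L = {p. fst p < snd p \<and> snd p < L}"

lemma pairsL_sub: "pairsL L \<subseteq> {0..<L} \<times> {0..<L}"
  by (auto simp: pairsL_def)

lemma pairsL_finite: "finite (pairsL L)"
  by (rule finite_subset[OF pairsL_sub]) simp

lemma pairsL_card: "card (pairsL L) \<le> L^2"
  using card_mono[OF _ pairsL_sub] by (simp add: card_cartesian_product power2_eq_square)

lemma noninj_sub:
  "{xs\<in>walks U R L u u. \<not> inj_on (nth xs) {0..<L}} \<subseteq>
   (\<Union>p\<in>pairsL L. {xs\<in>walks U R L u u. xs!fst p = xs!snd p})"
proof
  fix xs assume xs: "xs \<in> {xs\<in>walks U R L u u. \<not> inj_on (nth xs) {0..<L}}"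
  then obtain i j where ij: "i \<in> {0..<L}" "j \<in> {0..<L}" "i \<noteq> j" "xs!i = xs!j"
    unfolding inj_on_def by auto
  show "xs \<in> (\<Union>p\<in>pairsL L. {xs\<in>walks U R L u u. xs!fst p = xs!snd p})"
  proof (cases "i < j")
    case True
    then show ?thesis using xs ij by (auto simp: pairsL_def intro!: bexI[where x="(i,j)"])
  next
    case False
    then have "j < i" using ij by simp
    then have "(j, i) \<in> pairsL L" using ij by (auto simp: pairsL_def)
    then show ?thesis using xs ij by force
  qed
qed

lemma noninj_card:
  assumes fin: "finite U"
  shows "real (card {xs\<in>walks U R L u u. \<not> inj_on (nth xs) {0..<L}}) \<le>
   (\<Sum>p\<in>pairsL L. real (card {xs\<in>walks U R L u u. xs!fst p = xs!snd p}))"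
proof -
  have "card {xs\<in>walks U R L u u. \<not> inj_on (nth xs) {0..<L}} \<le>
        card (\<Union>p\<in>pairsL L. {xs\<in>walks U R L u u. xs!fst p = xs!snd p})"
    by (rule card_mono[OF _ noninj_sub]) (simp add: pairsL_finite walks_finite fin)
  also have "\<dots> \<le> (\<Sum>p\<in>pairsL L. card {xs\<in>walks U R L u u. xs!fst p = xs!snd p})"
    by (rule card_UN_le[OF pairsL_finite])
  finally show ?thesis by (simp flip: of_nat_sum)
qed

lemma degenerate_bound:
  assumes fin: "finite U" and sym: "symp R" and bip: "\<And>a b. R a b \<Longrightarrow> (a \<in> X \<longleftrightarrow> b \<notin> X)"
    and k: "k \<ge> 2" and d: "d > 0"
  shows "(\<Sum>u\<in>U. real (card {xs\<in>walks U R (2*k) u u. \<not> inj_on (nth xs) {0..<2*k}})) \<le>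
     real ((2*k)^2) * (d * (\<Sum>v\<in>U. W U R (2*k) v v) + (\<Sum>v\<in>U. (W U R 2 v v) ^ k) / d ^ (k-1))"
proof -
  define L where "L = 2 * k"
  define M where "M = d * (\<Sum>v\<in>U. W U R (2*k) v v) + (\<Sum>v\<in>U. (W U R 2 v v) ^ k) / d ^ (k-1)"
  have "(\<Sum>v\<in>U. W U R (2*k) v v) \<ge> 0" "(\<Sum>v\<in>U. (W U R 2 v v) ^ k) \<ge> 0"
    by (auto simp: W_nonneg intro!: sum_nonneg)
  then have M0: "M \<ge> 0" using d by (simp add: M_def)
  have "(\<Sum>u\<in>U. real (card {xs\<in>walks U R L u u. \<not> inj_on (nth xs) {0..<L}})) \<le>
        (\<Sum>u\<in>U. \<Sum>p\<in>pairsL L. real (card {xs\<in>walks U R L u u. xs!fst p = xs!snd p}))"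
    by (rule sum_mono, rule noninj_card[OF fin])
  also have "\<dots> = (\<Sum>p\<in>pairsL L. \<Sum>u\<in>U. real (card {xs\<in>walks U R L u u. xs!fst p = xs!snd p}))"
    by (rule sum.swap)
  also have "\<dots> = (\<Sum>p\<in>pairsL L. \<Sum>v\<in>U. W U R (snd p - fst p) v v * W U R (L - (snd p - fst p)) v v)"
    by (rule sum.cong[OF refl], rule pair_sum[OF fin]) (auto simp: pairsL_def)
  also have "\<dots> \<le> (\<Sum>p\<in>pairsL L. \<Sum>v\<in>U. d * W U R (2*k) v v + (W U R 2 v v) ^ k / d ^ (k-1))"
  proof (rule sum_mono, rule sum_mono)
    fix p v assume p: "p \<in> pairsL L" and v: "v \<in> U"
    show "W U R (snd p - fst p) v v * W U R (L - (snd p - fst p)) v v \<le>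
          d * W U R (2*k) v v + (W U R 2 v v) ^ k / d ^ (k-1)"
      using vertex_bound[OF fin sym bip v k _ _ d, of "snd p - fst p"] p
      by (auto simp: pairsL_def L_def)
  qed
  also have "\<dots> = real (card (pairsL L)) * M"
    by (simp add: M_def sum.distrib sum_distrib_left sum_divide_distrib)
  also have "\<dots> \<le> real (L^2) * M"
    using pairsL_card[of L] M0 by (simp add: mult_right_mono)
  finally show ?thesis by (simp add: L_def M_def)
qed



definition cyc_of :: "nat \<Rightarrow> 'a list \<Rightarrow> 'a set set" where
  "cyc_of L xs = (\<lambda>i. {xs!i, xs!((i+1) mod L)}) ` {0..<L}"

lemma cyc_of_in:
  assumes UV: "U \<subseteq> V" and RE: "\<And>a b. R a b \<Longrightarrow> {a,b} \<in> Es" and L: "L \<ge> 1"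
    and xs: "xs \<in> walks U R L u u" and inj: "inj_on (nth xs) {0..<L}"
  shows "cyc_of L xs \<in> cycles_of_length V Es L"
  unfolding cycles_of_length_def cyc_of_def
proof (intro CollectI exI conjI allI impI)
  show "inj_on (nth xs) {0..<L}" by (rule inj)
  show "nth xs ` {0..<L} \<subseteq> V"
    using xs UV walks_nth_in[OF xs] by auto
  fix i assume i: "i < L"
  show "{xs ! i, xs ! ((i + 1) mod L)} \<in> Es"
  proof (cases "i + 1 < L")
    case True
    then have "R (xs!i) (xs!(i+1))" using xs by (simp add: walks_def)
    then show ?thesis using True RE by simp
  next
    case False
    then have "i + 1 = L" using i by simp
    then have "R (xs!i) (xs!L)" "(i+1) mod L = 0" "xs!L = xs!0" using xs i by (auto simp: walks_def)
    then show ?thesis using RE by metis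
  qed
qed simp

lemma cycles_finite:
  assumes "finite V" and "\<forall>e\<in>Es. e \<subseteq> V"
  shows "finite (cycles_of_length V Es L)"
proof (rule finite_subset[of _ "Pow (Pow V)"])
  show "cycles_of_length V Es L \<subseteq> Pow (Pow V)"
    using assms unfolding cycles_of_length_def by auto
  show "finite (Pow (Pow V))" using assms by simp
qed

lemma fiber_card:
  assumes L: "L \<ge> 1" and fin: "finite U"
  shows "card {xs\<in>(\<Union>u\<in>U. {xs\<in>walks U R L u u. inj_on (nth xs) {0..<L}}). cyc_of L xs = F} \<le> L ^ L"
    (is "card ?Fb \<le> _")
proof (cases "?Fb = {}")
  case True show ?thesis unfolding True by simp
next
  case False
  then obtain xs0 where xs0: "xs0 \<in> ?Fb" by blast
  define S where "S = nth xs0 ` {0..<L}"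
  have cS: "card S \<le> L" unfolding S_def using card_image_le[of "{0..<L}" "nth xs0"] by simp
  have US: "\<Union>F \<subseteq> S"
  proof
    fix a assume "a \<in> \<Union>F"
    then have "a \<in> \<Union>(cyc_of L xs0)" using xs0 by simp
    then obtain i where i: "i < L" "a = xs0!i \<or> a = xs0!((i+1) mod L)"
      unfolding cyc_of_def by auto
    moreover have "(i+1) mod L < L" using L by simp
    ultimately show "a \<in> S" unfolding S_def by auto
  qed
  have lenw: "length xs = Suc L" if "xs \<in> ?Fb" for xs using that walks_len by fastforce
  have inj: "inj_on (take L) ?Fb"
  proof (rule inj_onI)
    fix xs ys assume xs: "xs \<in> ?Fb" and ys: "ys \<in> ?Fb" and eq: "take L xs = take L ys"
    have cx: "xs ! L = xs ! 0" "ys ! L = ys ! 0" using xs ys by (auto simp: walks_def)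
    have "xs = take (Suc L) xs" using lenw[OF xs] by simp
    also have "\<dots> = take L xs @ [xs ! L]" by (rule take_Suc_conv_app_nth) (use lenw[OF xs] in simp)
    finally have ex: "xs = take L xs @ [xs ! 0]" using cx by simp
    have "ys = take (Suc L) ys" using lenw[OF ys] by simp
    also have "\<dots> = take L ys @ [ys ! L]" by (rule take_Suc_conv_app_nth) (use lenw[OF ys] in simp)
    finally have ey: "ys = take L ys @ [ys ! 0]" using cx by simp
    have "take L xs ! 0 = take L ys ! 0" using eq by simp
    then have "xs ! 0 = ys ! 0" using L by simp
    then show "xs = ys" using ex ey eq by metis
  qed
  have img: "take L ` ?Fb \<subseteq> {ys. set ys \<subseteq> S \<and> length ys = L}"
  proof
    fix ys assume "ys \<in> take L ` ?Fb"
    then obtain xs where xs: "xs \<in> ?Fb" and ys: "ys = take L xs" by blast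
    have "length ys = L" using lenw[OF xs] ys by simp
    moreover have "set ys \<subseteq> \<Union>F"
    proof
      fix a assume "a \<in> set ys"
      then obtain i where i: "i < L" "a = xs ! i" using ys lenw[OF xs] by (auto simp: in_set_conv_nth)
      then have "{xs!i, xs!((i+1) mod L)} \<in> cyc_of L xs" unfolding cyc_of_def by auto
      then show "a \<in> \<Union>F" using xs i by auto
    qed
    ultimately show "ys \<in> {ys. set ys \<subseteq> S \<and> length ys = L}" using US by auto
  qed
  have "card ?Fb = card (take L ` ?Fb)" using card_image[OF inj] by simp
  also have "\<dots> \<le> card {ys. set ys \<subseteq> S \<and> length ys = L}"
    by (rule card_mono[OF _ img]) (simp add: finite_lists_length_eq S_def)
  also have "\<dots> = card S ^ L" by (simp add: card_lists_length_eq S_def)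
  also have "\<dots> \<le> L ^ L" using cS by (simp add: power_mono)
  finally show ?thesis .
qed

lemma injective_bound:
  assumes finV: "finite V" and EV: "\<forall>e\<in>Es. e \<subseteq> V" and UV: "U \<subseteq> V"
    and RE: "\<And>a b. R a b \<Longrightarrow> {a,b} \<in> Es" and L: "L \<ge> 1"
  shows "(\<Sum>u\<in>U. real (card {xs\<in>walks U R L u u. inj_on (nth xs) {0..<L}}))
         \<le> real (L ^ L) * real (card (cycles_of_length V Es L))"
proof -
  have fin: "finite U" using finV UV finite_subset by blast
  define I where "I = (\<Union>u\<in>U. {xs\<in>walks U R L u u. inj_on (nth xs) {0..<L}})"
  define Cy where "Cy = cycles_of_length V Es L"
  have finCy: "finite Cy" using cycles_finite[OF finV EV] by (simp add: Cy_def)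
  have "(\<Sum>u\<in>U. card {xs\<in>walks U R L u u. inj_on (nth xs) {0..<L}}) = card I"
    unfolding I_def
  proof (rule card_UN_disjoint[symmetric])
    show "\<forall>u\<in>U. finite {xs\<in>walks U R L u u. inj_on (nth xs) {0..<L}}"
      using walks_finite[OF fin] by auto
    show "\<forall>u\<in>U. \<forall>v\<in>U. u \<noteq> v \<longrightarrow> {xs\<in>walks U R L u u. inj_on (nth xs) {0..<L}} \<inter>
       {xs\<in>walks U R L v v. inj_on (nth xs) {0..<L}} = {}"
      by (auto simp: walks_def)
  qed (rule fin)
  also have "I = (\<Union>F\<in>Cy. {xs\<in>I. cyc_of L xs = F})"
    using cyc_of_in[OF UV RE L] by (auto simp: I_def Cy_def)
  also have "card \<dots> \<le> (\<Sum>F\<in>Cy. card {xs\<in>I. cyc_of L xs = F})"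
    by (rule card_UN_le[OF finCy])
  also have "\<dots> \<le> (\<Sum>F\<in>Cy. L ^ L)"
    by (rule sum_mono) (unfold I_def, rule fiber_card[OF L fin])
  also have "\<dots> = L ^ L * card Cy" by simp
  finally have "(\<Sum>u\<in>U. card {xs\<in>walks U R L u u. inj_on (nth xs) {0..<L}}) \<le> L ^ L * card Cy" .
  then have "real (\<Sum>u\<in>U. card {xs\<in>walks U R L u u. inj_on (nth xs) {0..<L}}) \<le> real (L ^ L * card Cy)"
    by (simp only: of_nat_le_iff)
  then show ?thesis unfolding Cy_def of_nat_mult of_nat_power of_nat_sum .
qed



lemma S_split:
  assumes fin: "finite U"
  shows "(\<Sum>x\<in>X. \<Sum>x'\<in>X. W U R (p+q) x x') = (\<Sum>z\<in>U. (\<Sum>x\<in>X. W U R p x z) * (\<Sum>x'\<in>X. W U R q z x'))"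
proof -
  have "(\<Sum>x\<in>X. \<Sum>x'\<in>X. W U R (p+q) x x') = (\<Sum>x\<in>X. \<Sum>x'\<in>X. \<Sum>z\<in>U. W U R p x z * W U R q z x')"
    by (simp add: W_split[OF fin])
  also have "\<dots> = (\<Sum>x\<in>X. \<Sum>z\<in>U. \<Sum>x'\<in>X. W U R p x z * W U R q z x')"
    by (rule sum.cong[OF refl], rule sum.swap)
  also have "\<dots> = (\<Sum>z\<in>U. \<Sum>x\<in>X. \<Sum>x'\<in>X. W U R p x z * W U R q z x')"
    by (rule sum.swap)
  also have "\<dots> = (\<Sum>z\<in>U. (\<Sum>x\<in>X. W U R p x z) * (\<Sum>x'\<in>X. W U R q z x'))"
    by (simp add: sum_product)
  finally show ?thesis .
qed

lemma S_sq:
  assumes fin: "finite U" and sym: "symp R"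
  shows "(\<Sum>x\<in>X. \<Sum>x'\<in>X. W U R (2*p) x x') = (\<Sum>z\<in>U. (\<Sum>x\<in>X. W U R p x z)\<^sup>2)"
proof -
  have "(\<Sum>x\<in>X. \<Sum>x'\<in>X. W U R (2*p) x x') = (\<Sum>x\<in>X. \<Sum>x'\<in>X. W U R (p+p) x x')"
    by (simp add: mult_2)
  also have "\<dots> = (\<Sum>z\<in>U. (\<Sum>x\<in>X. W U R p x z) * (\<Sum>x'\<in>X. W U R p z x'))"
    by (rule S_split[OF fin])
  also have "\<dots> = (\<Sum>z\<in>U. (\<Sum>x\<in>X. W U R p x z)\<^sup>2)"
  proof (rule sum.cong[OF refl])
    fix z
    have "(\<Sum>x'\<in>X. W U R p z x') = (\<Sum>x\<in>X. W U R p x z)"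
      by (rule sum.cong[OF refl]) (rule W_sym[OF sym])
    then show "(\<Sum>x\<in>X. W U R p x z) * (\<Sum>x'\<in>X. W U R p z x') = (\<Sum>x\<in>X. W U R p x z)\<^sup>2"
      by (simp add: power2_eq_square)
  qed
  finally show ?thesis .
qed

lemma S_lc:
  assumes fin: "finite U" and sym: "symp R" and j: "j \<ge> 1"
  shows "(\<Sum>x\<in>X. \<Sum>x'\<in>X. W U R (2*j) x x')\<^sup>2 \<le>
     (\<Sum>x\<in>X. \<Sum>x'\<in>X. W U R (2*(j-1)) x x') * (\<Sum>x\<in>X. \<Sum>x'\<in>X. W U R (2*(j+1)) x x')"
proof -
  have e: "2*j = (j-1) + (j+1)" using j by simp
  have "(\<Sum>x\<in>X. \<Sum>x'\<in>X. W U R (2*j) x x') = (\<Sum>z\<in>U. (\<Sum>x\<in>X. W U R (j-1) x z) * (\<Sum>x'\<in>X. W U R (j+1) z x'))"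
    unfolding e by (rule S_split[OF fin])
  also have "\<dots> = (\<Sum>z\<in>U. (\<Sum>x\<in>X. W U R (j-1) x z) * (\<Sum>x\<in>X. W U R (j+1) x z))"
    by (rule sum.cong[OF refl], rule arg_cong[where f="\<lambda>t. _ * t"], rule sum.cong[OF refl], rule W_sym[OF sym])
  finally have eq: "(\<Sum>x\<in>X. \<Sum>x'\<in>X. W U R (2*j) x x') = \<dots>" .
  have "(\<Sum>x\<in>X. \<Sum>x'\<in>X. W U R (2*j) x x')\<^sup>2 =
     (\<Sum>z\<in>U. (\<Sum>x\<in>X. W U R (j-1) x z) * (\<Sum>x\<in>X. W U R (j+1) x z))\<^sup>2"
    by (simp only: eq)
  also have "\<dots> \<le> (\<Sum>z\<in>U. (\<Sum>x\<in>X. W U R (j-1) x z)\<^sup>2) * (\<Sum>z\<in>U. (\<Sum>x\<in>X. W U R (j+1) x z)\<^sup>2)"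
    by (rule Cauchy_Schwarz_ineq_sum)
  also have "\<dots> = (\<Sum>x\<in>X. \<Sum>x'\<in>X. W U R (2*(j-1)) x x') * (\<Sum>x\<in>X. \<Sum>x'\<in>X. W U R (2*(j+1)) x x')"
    by (simp only: S_sq[OF fin sym])
  finally show ?thesis .
qed

lemma S_0:
  assumes "X \<subseteq> U" "finite X"
  shows "(\<Sum>x\<in>X. \<Sum>x'\<in>X. W U R (2*0) x x') = real (card X)"
proof -
  have "(\<Sum>x\<in>X. \<Sum>x'\<in>X. W U R (2*0) x x') = (\<Sum>x\<in>X. \<Sum>x'\<in>X. if x = x' then 1 else 0)"
    using assms by (intro sum.cong refl) (auto simp: W_0)
  also have "\<dots> = (\<Sum>x\<in>X. 1)" using assms by (simp add: sum.delta)
  finally show ?thesis by simp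
qed

lemma S_1:
  assumes fin: "finite U" and sym: "symp R" and XU: "X \<subseteq> U" and YU: "Y \<subseteq> U"
    and Yne: "card Y > 0"
  shows "(real (card {p\<in>X\<times>Y. R (fst p) (snd p)}))\<^sup>2 / real (card Y) \<le> (\<Sum>x\<in>X. \<Sum>x'\<in>X. W U R (2*1) x x')"
proof -
  have finX: "finite X" and finY: "finite Y" using fin XU YU finite_subset by auto
  define a where "a = (\<lambda>z. \<Sum>x\<in>X. W U R 1 x z)"
  have "real (card {p\<in>X\<times>Y. R (fst p) (snd p)}) = (\<Sum>p\<in>X\<times>Y. if R (fst p) (snd p) then 1 else 0)"
    using finX finY by (simp add: sum.If_cases Int_def conj_commute)
  also have "\<dots> = (\<Sum>x\<in>X. \<Sum>y\<in>Y. if R x y then 1 else 0)"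
    by (subst sum.cartesian_product) (simp add: split_def)
  also have "\<dots> = (\<Sum>y\<in>Y. \<Sum>x\<in>X. if R x y then 1 else 0)" by (rule sum.swap)
  also have "\<dots> = (\<Sum>y\<in>Y. a y)"
    unfolding a_def using XU YU by (intro sum.cong refl) (auto simp: W_1 W_1')
  finally have ea: "real (card {p\<in>X\<times>Y. R (fst p) (snd p)}) = (\<Sum>y\<in>Y. a y)" .
  have "(\<Sum>y\<in>Y. a y * 1)\<^sup>2 \<le> (\<Sum>y\<in>Y. (a y)\<^sup>2) * (\<Sum>y\<in>Y. 1\<^sup>2)"
    by (rule Cauchy_Schwarz_ineq_sum)
  then have "(\<Sum>y\<in>Y. a y)\<^sup>2 \<le> (\<Sum>y\<in>Y. (a y)\<^sup>2) * real (card Y)" by simp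
  then have "(\<Sum>y\<in>Y. a y)\<^sup>2 / real (card Y) \<le> (\<Sum>y\<in>Y. (a y)\<^sup>2)"
    using Yne by (simp add: divide_le_eq)
  also have "\<dots> \<le> (\<Sum>z\<in>U. (a z)\<^sup>2)"
    by (rule sum_mono2[OF fin YU]) simp
  also have "\<dots> = (\<Sum>x\<in>X. \<Sum>x'\<in>X. W U R (2*1) x x')"
    unfolding a_def by (rule S_sq[OF fin sym, symmetric])
  finally show ?thesis using ea by simp
qed

lemma ratio_growth:
  fixes S :: "nat \<Rightarrow> real"
  assumes S0: "S 0 > 0" and S1: "S 1 > 0" and lc: "\<And>j. j \<ge> 1 \<Longrightarrow> (S j)\<^sup>2 \<le> S (j-1) * S (j+1)"
  shows "S (j+1) \<ge> (S 1 / S 0) * S j \<and> S j > 0"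
proof (induction j)
  case 0 then show ?case using S0 by simp
next
  case (Suc j)
  have pj: "S j > 0" and IH: "S (j+1) \<ge> (S 1 / S 0) * S j" using Suc by auto
  have r: "S 1 / S 0 > 0" using S0 S1 by simp
  have "(S 1 / S 0) * S j > 0" by (rule mult_pos_pos[OF r pj])
  then have p1: "S (Suc j) > 0" using IH by simp
  have L: "(S (Suc j))\<^sup>2 \<le> S j * S (Suc j + 1)" using lc[of "Suc j"] by simp
  have "S j * ((S 1 / S 0) * S (Suc j)) = ((S 1 / S 0) * S j) * S (Suc j)" by simp
  also have "\<dots> \<le> S (Suc j) * S (Suc j)"
    using IH p1 by (intro mult_right_mono) auto
  also have "\<dots> \<le> S j * S (Suc j + 1)" using L by (simp add: power2_eq_square)
  finally have "S j * ((S 1 / S 0) * S (Suc j)) \<le> S j * S (Suc j + 1)" .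
  then have "(S 1 / S 0) * S (Suc j) \<le> S (Suc j + 1)" by (simp only: mult_le_cancel_left_pos[OF pj])
  then show ?case using p1 by simp
qed

lemma ratio_pow:
  fixes S :: "nat \<Rightarrow> real"
  assumes S0: "S 0 > 0" and S1: "S 1 > 0" and lc: "\<And>j. j \<ge> 1 \<Longrightarrow> (S j)\<^sup>2 \<le> S (j-1) * S (j+1)"
  shows "S j \<ge> (S 1 / S 0) ^ j * S 0"
proof (induction j)
  case 0 then show ?case by simp
next
  case (Suc j)
  have r: "S 1 / S 0 > 0" using S0 S1 by simp
  have "(S 1 / S 0) ^ Suc j * S 0 = (S 1 / S 0) * ((S 1 / S 0) ^ j * S 0)" by simp
  also have "\<dots> \<le> (S 1 / S 0) * S j" by (rule mult_left_mono) (use Suc r in auto)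
  also have "\<dots> \<le> S (Suc j)" using ratio_growth[OF S0 S1 lc, of j] by simp
  finally show ?case .
qed

lemma diag_lower:
  assumes fin: "finite U" and sym: "symp R" and XU: "X \<subseteq> U" and Xne: "card X > 0"
  shows "(\<Sum>x\<in>X. \<Sum>x'\<in>X. W U R (2*k) x x') / real (card X) \<le> (\<Sum>x\<in>X. W U R (2*k) x x)"
proof -
  have finX: "finite X" using fin XU finite_subset by auto
  define a where "a = (\<lambda>x. W U R (2*k) x x)"
  have a0: "a x \<ge> 0" for x by (simp add: a_def W_nonneg)
  have le: "W U R (2*k) x x' \<le> sqrt (a x) * sqrt (a x')" for x x'
  proof -
    have "(W U R (k+k) x x')\<^sup>2 \<le> W U R (2*k) x x * W U R (2*k) x' x'" by (rule W_CS[OF fin sym])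
    then have "W U R (2*k) x x' \<le> sqrt (W U R (2*k) x x * W U R (2*k) x' x')"
      by (simp add: mult_2 real_le_rsqrt)
    then show ?thesis by (simp add: a_def real_sqrt_mult)
  qed
  have "(\<Sum>x\<in>X. \<Sum>x'\<in>X. W U R (2*k) x x') \<le> (\<Sum>x\<in>X. \<Sum>x'\<in>X. sqrt (a x) * sqrt (a x'))"
    by (intro sum_mono le)
  also have "\<dots> = (\<Sum>x\<in>X. sqrt (a x))\<^sup>2"
    by (simp add: power2_eq_square sum_product)
  also have "\<dots> = (\<Sum>x\<in>X. sqrt (a x) * 1)\<^sup>2" by simp
  also have "\<dots> \<le> (\<Sum>x\<in>X. (sqrt (a x))\<^sup>2) * (\<Sum>x\<in>X. 1\<^sup>2)" by (rule Cauchy_Schwarz_ineq_sum)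
  also have "\<dots> = (\<Sum>x\<in>X. a x) * real (card X)" using a0 by simp
  finally show ?thesis using Xne by (simp add: divide_le_eq a_def)
qed



definition bipR :: "'a set set \<Rightarrow> 'a set \<Rightarrow> 'a set \<Rightarrow> 'a \<Rightarrow> 'a \<Rightarrow> bool" where
  "bipR Es X Y x y \<longleftrightarrow> {x,y} \<in> Es \<and> ((x \<in> X \<and> y \<in> Y) \<or> (x \<in> Y \<and> y \<in> X))"

lemma bipR_symp: "symp (bipR Es X Y)"
  unfolding symp_def bipR_def by (auto simp: insert_commute)

lemma bipR_bip: "X \<inter> Y = {} \<Longrightarrow> bipR Es X Y a b \<Longrightarrow> (a \<in> X \<longleftrightarrow> b \<notin> X)"
  unfolding bipR_def by auto

lemma bipR_E: "bipR Es X Y a b \<Longrightarrow> {a,b} \<in> Es"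
  unfolding bipR_def by auto

lemma walks_split_inj:
  assumes fin: "finite U"
  shows "real (card (walks U R L u u)) = real (card {xs\<in>walks U R L u u. inj_on (nth xs) {0..<L}})
     + real (card {xs\<in>walks U R L u u. \<not> inj_on (nth xs) {0..<L}})"
proof -
  have f: "finite (walks U R L u u)" by (rule walks_finite[OF fin])
  have eq: "walks U R L u u = {xs\<in>walks U R L u u. inj_on (nth xs) {0..<L}} \<union> {xs\<in>walks U R L u u. \<not> inj_on (nth xs) {0..<L}}"
    by auto
  have "card (walks U R L u u) = card ({xs\<in>walks U R L u u. inj_on (nth xs) {0..<L}} \<union> {xs\<in>walks U R L u u. \<not> inj_on (nth xs) {0..<L}})"
    by (rule arg_cong[where f=card, OF eq])
  also have "\<dots> = card {xs\<in>walks U R L u u. inj_on (nth xs) {0..<L}} + card {xs\<in>walks U R L u u. \<not> inj_on (nth xs) {0..<L}}"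
    by (rule card_Un_disjoint) (use f in auto)
  finally show ?thesis by simp
qed

lemma core_upper:
  assumes finV: "finite V" and EV: "\<forall>e\<in>Es. e \<subseteq> V" and UV: "X \<union> Y \<subseteq> V"
    and disj: "X \<inter> Y = {}" and k: "k \<ge> 2"
  shows "(\<Sum>v\<in>X\<union>Y. W (X\<union>Y) (bipR Es X Y) (2*k) v v) \<le>
     2 * real ((2*k)^(2*k)) * real (card (cycles_of_length V Es (2*k)))
     + (8 * real k ^ 2) ^ k * (\<Sum>v\<in>X\<union>Y. (W (X\<union>Y) (bipR Es X Y) 2 v v) ^ k)"
proof -
  define U where "U = X \<union> Y"
  define R where "R = bipR Es X Y"
  have fin: "finite U" using finV UV finite_subset by (auto simp: U_def)
  define h where "h = (\<Sum>v\<in>U. W U R (2*k) v v)"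
  define D where "D = (\<Sum>v\<in>U. (W U R 2 v v) ^ k)"
  define t where "t = real (card (cycles_of_length V Es (2*k)))"
  define d :: real where "d = 1 / (8 * real k ^ 2)"
  have d0: "d > 0" using k by (simp add: d_def)
  have "h = (\<Sum>u\<in>U. real (card {xs\<in>walks U R (2*k) u u. inj_on (nth xs) {0..<2*k}}))
     + (\<Sum>u\<in>U. real (card {xs\<in>walks U R (2*k) u u. \<not> inj_on (nth xs) {0..<2*k}}))"
    unfolding h_def W_def by (simp add: walks_split_inj[OF fin] sum.distrib)
  also have "\<dots> \<le> real ((2*k)^(2*k)) * t + real ((2*k)^2) * (d * h + D / d ^ (k-1))"
  proof (rule add_mono)
    show "(\<Sum>u\<in>U. real (card {xs\<in>walks U R (2*k) u u. inj_on (nth xs) {0..<2*k}})) \<le> real ((2*k)^(2*k)) * t"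
      unfolding t_def by (rule injective_bound[OF finV EV]) (use UV k in \<open>auto simp: U_def R_def bipR_E\<close>)
    show "(\<Sum>u\<in>U. real (card {xs\<in>walks U R (2*k) u u. \<not> inj_on (nth xs) {0..<2*k}})) \<le> real ((2*k)^2) * (d * h + D / d ^ (k-1))"
      unfolding h_def D_def
      by (rule degenerate_bound[where X=X, OF fin _ _ k d0]) (simp_all add: R_def bipR_symp bipR_bip[OF disj])
  qed
  also have "real ((2*k)^2) * (d * h + D / d ^ (k-1)) = h / 2 + (8 * real k ^ 2) ^ k * D / 2"
  proof -
    have A: "real ((2*k)^2) * d = 1/2" using k by (simp add: d_def power_mult_distrib)
    have B: "real ((2*k)^2) / d ^ (k-1) = (8 * real k ^ 2) ^ k / 2"
    proof -
      have "(8 * real k ^ 2) ^ k = (8 * real k ^ 2) * (8 * real k ^ 2) ^ (k-1)"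
        using k by (metis Suc_diff_1 less_le_trans pos2 power_Suc)
      then show ?thesis using k by (simp add: d_def power_one_over power_mult_distrib)
    qed
    have e: "real ((2*k)^2) * (d * h + D / d ^ (k-1)) = (real ((2*k)^2) * d) * h + (real ((2*k)^2) / d ^ (k-1)) * D"
      by (simp add: algebra_simps)
    show ?thesis unfolding e A B by simp
  qed
  finally have "h \<le> real ((2*k)^(2*k)) * t + (h / 2 + (8 * real k ^ 2) ^ k * D / 2)" by simp
  then have "h \<le> 2 * real ((2*k)^(2*k)) * t + (8 * real k ^ 2) ^ k * D" by simp
  then show ?thesis by (simp add: h_def D_def t_def U_def R_def)
qed



lemma core_lower:
  assumes fin: "finite (X \<union> Y)" and k: "k \<ge> 1" and Xne: "card X > 0" and Yne: "card Y > 0"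
  shows "((real (card {p\<in>X\<times>Y. bipR Es X Y (fst p) (snd p)}))\<^sup>2 / (real (card X) * real (card Y))) ^ k
     \<le> (\<Sum>v\<in>X\<union>Y. W (X\<union>Y) (bipR Es X Y) (2*k) v v)"
proof -
  define U where "U = X \<union> Y"
  define R where "R = bipR Es X Y"
  define e where "e = real (card {p\<in>X\<times>Y. bipR Es X Y (fst p) (snd p)})"
  define m where "m = real (card X)"
  define n where "n = real (card Y)"
  have finU: "finite U" using fin by (simp add: U_def)
  have sym: "symp R" by (simp add: R_def bipR_symp)
  have XU: "X \<subseteq> U" and YU: "Y \<subseteq> U" by (auto simp: U_def)
  have m0: "m > 0" and n0: "n > 0" using Xne Yne by (auto simp: m_def n_def)
  have RHS0: "(\<Sum>x\<in>X. W U R (2*k) x x) \<le> (\<Sum>v\<in>U. W U R (2*k) v v)"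
    by (rule sum_mono2[OF finU XU]) (simp add: W_nonneg)
  show ?thesis
  proof (cases "e = 0")
    case True
    have "0 \<le> (\<Sum>v\<in>U. W U R (2*k) v v)" by (simp add: sum_nonneg W_nonneg)
    moreover have "(e\<^sup>2 / (m * n)) ^ k = 0" using True k by simp
    ultimately have "(e\<^sup>2 / (m * n)) ^ k \<le> (\<Sum>v\<in>U. W U R (2*k) v v)" by linarith
    then show ?thesis by (simp only: e_def m_def n_def U_def R_def)
  next
    case False
    then have e0: "e > 0" by (simp add: e_def)
    define S where "S = (\<lambda>j. \<Sum>x\<in>X. \<Sum>x'\<in>X. W U R (2*j) x x')"
    have S0: "S 0 = m" unfolding S_def m_def by (rule S_0[OF XU]) (use finU XU finite_subset in blast)
    have S1: "e\<^sup>2 / n \<le> S 1" unfolding S_def e_def n_def R_def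
      by (rule S_1[OF finU _ XU YU Yne, unfolded R_def]) (simp add: bipR_symp)
    have "e\<^sup>2 / n > 0" using e0 n0 by simp
    then have S1p: "S 1 > 0" using S1 by linarith
    have lc: "\<And>j. j \<ge> 1 \<Longrightarrow> (S j)\<^sup>2 \<le> S (j-1) * S (j+1)"
      unfolding S_def by (rule S_lc[OF finU sym])
    have "(S 1 / S 0) ^ k * S 0 \<le> S k" by (rule ratio_pow) (use S0 m0 S1p lc in auto)
    moreover have "S k / m \<le> (\<Sum>x\<in>X. W U R (2*k) x x)"
      unfolding S_def m_def by (rule diag_lower[OF finU sym XU Xne])
    ultimately have "((S 1 / S 0) ^ k * S 0) / m \<le> (\<Sum>x\<in>X. W U R (2*k) x x)"
      using m0 by (meson divide_right_mono less_imp_le order.trans)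
    moreover have "((S 1 / S 0) ^ k * S 0) / m = (S 1 / m) ^ k" using S0 m0 by simp
    ultimately have "(S 1 / m) ^ k \<le> (\<Sum>x\<in>X. W U R (2*k) x x)" by simp
    moreover have "(e\<^sup>2 / (m * n)) ^ k \<le> (S 1 / m) ^ k"
    proof (rule power_mono)
      show "e\<^sup>2 / (m * n) \<le> S 1 / m" using S1 m0 n0
        by (simp add: divide_le_eq field_simps)
      show "0 \<le> e\<^sup>2 / (m * n)" using m0 n0 by simp
    qed
    ultimately have "(e\<^sup>2 / (m * n)) ^ k \<le> (\<Sum>v\<in>U. W U R (2*k) v v)" using RHS0 by linarith
    then show ?thesis by (simp only: e_def m_def n_def U_def R_def)
  qed
qed



definition ee :: "'a set set \<Rightarrow> 'a set \<Rightarrow> 'a set \<Rightarrow> nat" where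
  "ee Es X Y = card {p\<in>X\<times>Y. {fst p, snd p} \<in> Es}"

definition dg :: "'a set set \<Rightarrow> 'a set \<Rightarrow> 'a \<Rightarrow> nat" where
  "dg Es Y x = card {y\<in>Y. {x,y} \<in> Es}"

lemma ee_sum_real:
  assumes "finite X" "finite Y"
  shows "real (ee Es X Y) = (\<Sum>x\<in>X. \<Sum>y\<in>Y. if {x,y} \<in> Es then 1 else 0)"
proof -
  have "real (ee Es X Y) = (\<Sum>p\<in>X\<times>Y. if {fst p, snd p} \<in> Es then 1 else 0)"
    unfolding ee_def using assms by (simp add: sum.If_cases Int_def conj_commute)
  also have "\<dots> = (\<Sum>x\<in>X. \<Sum>y\<in>Y. if {x,y} \<in> Es then 1 else 0)"
    by (subst sum.cartesian_product) (simp add: split_def)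
  finally show ?thesis .
qed

lemma dg_real:
  assumes "finite Y"
  shows "real (dg Es Y x) = (\<Sum>y\<in>Y. if {x,y} \<in> Es then 1 else 0)"
  unfolding dg_def using assms by (simp add: sum.If_cases Int_def conj_commute)

lemma sum_dg1:
  assumes "finite X" "finite Y"
  shows "(\<Sum>x\<in>X. real (dg Es Y x)) = real (ee Es X Y)"
  using assms by (simp add: ee_sum_real dg_real)

lemma sum_dg2:
  assumes "finite X" "finite Y"
  shows "(\<Sum>y\<in>Y. real (dg Es X y)) = real (ee Es X Y)"
proof -
  have "(\<Sum>y\<in>Y. real (dg Es X y)) = (\<Sum>y\<in>Y. \<Sum>x\<in>X. if {x,y} \<in> Es then 1 else 0)"
    using assms by (simp add: dg_real insert_commute)
  also have "\<dots> = (\<Sum>x\<in>X. \<Sum>y\<in>Y. if {x,y} \<in> Es then 1 else 0)" by (rule sum.swap)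
  finally show ?thesis using assms by (simp add: ee_sum_real)
qed

lemma ee_bipR:
  assumes "X \<inter> Y = {}"
  shows "{p\<in>X\<times>Y. bipR Es X Y (fst p) (snd p)} = {p\<in>X\<times>Y. {fst p, snd p} \<in> Es}"
  using assms by (auto simp: bipR_def)

lemma W2_X:
  assumes fin: "finite (X \<union> Y)" and disj: "X \<inter> Y = {}" and v: "v \<in> X"
  shows "W (X\<union>Y) (bipR Es X Y) 2 v v = real (dg Es Y v)"
proof -
  have "W (X\<union>Y) (bipR Es X Y) 2 v v = real (card {z\<in>X\<union>Y. bipR Es X Y v z})"
    by (rule W_2_diag[OF fin bipR_symp]) (use v in auto)
  also have "{z\<in>X\<union>Y. bipR Es X Y v z} = {y\<in>Y. {v,y} \<in> Es}"
    using disj v by (auto simp: bipR_def)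
  finally show ?thesis by (simp add: dg_def)
qed

lemma W2_Y:
  assumes fin: "finite (X \<union> Y)" and disj: "X \<inter> Y = {}" and v: "v \<in> Y"
  shows "W (X\<union>Y) (bipR Es X Y) 2 v v = real (dg Es X v)"
proof -
  have "W (X\<union>Y) (bipR Es X Y) 2 v v = real (card {z\<in>X\<union>Y. bipR Es X Y v z})"
    by (rule W_2_diag[OF fin bipR_symp]) (use v in auto)
  also have "{z\<in>X\<union>Y. bipR Es X Y v z} = {x\<in>X. {v,x} \<in> Es}"
    using disj v by (auto simp: bipR_def insert_commute)
  finally show ?thesis by (simp add: dg_def)
qed

lemma pow_sum_bound:
  assumes "\<And>x. x \<in> X \<Longrightarrow> f x \<le> (D::real)" "\<And>x. x \<in> X \<Longrightarrow> f x \<ge> 0" "k \<ge> 1"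
  shows "(\<Sum>x\<in>X. f x ^ k) \<le> D ^ (k-1) * (\<Sum>x\<in>X. f x)"
proof -
  have "(\<Sum>x\<in>X. f x ^ k) \<le> (\<Sum>x\<in>X. D ^ (k-1) * f x)"
  proof (rule sum_mono)
    fix x assume x: "x \<in> X"
    have "f x ^ k = f x ^ (k-1) * f x" using assms(3) by (metis Suc_diff_le diff_Suc_1 power_Suc2 le_add_diff_inverse2 )
    also have "\<dots> \<le> D ^ (k-1) * f x"
      using assms x by (intro mult_right_mono power_mono) auto
    finally show "f x ^ k \<le> D ^ (k-1) * f x" .
  qed
  also have "\<dots> = D ^ (k-1) * (\<Sum>x\<in>X. f x)" by (simp add: sum_distrib_left)
  finally show ?thesis .
qed

lemma bounded_case:
  assumes finV: "finite V" and EV: "\<forall>e\<in>Es. e \<subseteq> V" and UV: "X \<union> Y \<subseteq> V"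
    and disj: "X \<inter> Y = {}" and k: "k \<ge> 2" and Xne: "card X > 0" and Yne: "card Y > 0"
    and D1: "\<And>x. x \<in> X \<Longrightarrow> real (dg Es Y x) \<le> D1"
    and D2: "\<And>y. y \<in> Y \<Longrightarrow> real (dg Es X y) \<le> D2"
  shows "((real (ee Es X Y))\<^sup>2 / (real (card X) * real (card Y))) ^ k \<le>
    2 * real ((2*k)^(2*k)) * real (card (cycles_of_length V Es (2*k)))
     + (8 * real k ^ 2) ^ k * (D1 ^ (k-1) + D2 ^ (k-1)) * real (ee Es X Y)"
proof -
  have fin: "finite (X \<union> Y)" using finV UV finite_subset by blast
  have finX: "finite X" and finY: "finite Y" using fin by auto
  define c where "c = (8 * real k ^ 2) ^ k"
  define T where "T = 2 * real ((2*k)^(2*k)) * real (card (cycles_of_length V Es (2*k)))"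
  define Sg where "Sg = (\<Sum>v\<in>X\<union>Y. (W (X\<union>Y) (bipR Es X Y) 2 v v) ^ k)"
  have c0: "c \<ge> 0" by (simp add: c_def)
  have "((real (ee Es X Y))\<^sup>2 / (real (card X) * real (card Y))) ^ k \<le>
     (\<Sum>v\<in>X\<union>Y. W (X\<union>Y) (bipR Es X Y) (2*k) v v)"
    using core_lower[OF fin _ Xne Yne, of k Es] k unfolding ee_def ee_bipR[OF disj] by simp
  also have "\<dots> \<le> T + c * Sg"
    unfolding T_def c_def Sg_def by (rule core_upper[OF finV EV UV disj k])
  finally have A: "((real (ee Es X Y))\<^sup>2 / (real (card X) * real (card Y))) ^ k \<le> T + c * Sg" .
  have "Sg = (\<Sum>x\<in>X. real (dg Es Y x) ^ k) + (\<Sum>y\<in>Y. real (dg Es X y) ^ k)"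
    unfolding Sg_def by (simp add: sum.union_disjoint[OF finX finY disj] W2_X[OF fin disj] W2_Y[OF fin disj])
  also have "\<dots> \<le> D1 ^ (k-1) * real (ee Es X Y) + D2 ^ (k-1) * real (ee Es X Y)"
  proof (rule add_mono)
    show "(\<Sum>x\<in>X. real (dg Es Y x) ^ k) \<le> D1 ^ (k-1) * real (ee Es X Y)"
      using pow_sum_bound[of X "\<lambda>x. real (dg Es Y x)" D1 k] D1 k sum_dg1[OF finX finY] by simp
    show "(\<Sum>y\<in>Y. real (dg Es X y) ^ k) \<le> D2 ^ (k-1) * real (ee Es X Y)"
      using pow_sum_bound[of Y "\<lambda>y. real (dg Es X y)" D2 k] D2 k sum_dg2[OF finX finY] by simp
  qed
  finally have B: "c * Sg \<le> c * ((D1 ^ (k-1) + D2 ^ (k-1)) * real (ee Es X Y))"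
    using c0 by (intro mult_left_mono) (auto simp: algebra_simps)
  from A B show ?thesis unfolding T_def c_def by (simp add: algebra_simps)
qed



lemma root_pow:
  fixes t :: real
  assumes "t \<ge> 0" "k \<ge> 1"
  shows "(t powr (1 / real k)) ^ k = t"
proof (cases "t = 0")
  case True then show ?thesis using assms by simp
next
  case False
  then have "(t powr (1 / real k)) ^ k = t powr (real k * (1 / real k))" by (simp add: powr_power)
  also have "\<dots> = t" using assms False by simp
  finally show ?thesis .
qed

definition FF :: "nat \<Rightarrow> real \<Rightarrow> real \<Rightarrow> real \<Rightarrow> real" where
  "FF k \<tau> a b = a * b powr (1 / real k) + b * a powr (1 / real k) + \<tau> * sqrt (a * b)"

lemma FF_sym: "FF k \<tau> a b = FF k \<tau> b a"
  unfolding FF_def by (simp add: ac_simps)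

lemma FF_nonneg: "0 \<le> a \<Longrightarrow> 0 \<le> b \<Longrightarrow> 0 \<le> \<tau> \<Longrightarrow> 0 \<le> FF k \<tau> a b"
  unfolding FF_def by simp

lemma FF_mono:
  assumes "0 \<le> a" "a \<le> a'" "0 \<le> b" "b \<le> b'" "0 \<le> \<tau>"
  shows "FF k \<tau> a b \<le> FF k \<tau> a' b'"
proof -
  have "a * b powr (1 / real k) \<le> a' * b' powr (1 / real k)"
    using assms by (intro mult_mono powr_mono2) auto
  moreover have "b * a powr (1 / real k) \<le> b' * a' powr (1 / real k)"
    using assms by (intro mult_mono powr_mono2) auto
  moreover have "\<tau> * sqrt (a * b) \<le> \<tau> * sqrt (a' * b')"
    using assms by (intro mult_left_mono real_sqrt_le_mono mult_mono) auto
  ultimately show ?thesis unfolding FF_def by linarith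
qed

lemma FF_shrink:
  assumes k: "k \<ge> 2" and a: "0 \<le> a" and am: "4^k * a \<le> m" and b: "0 \<le> b" and tau: "0 \<le> \<tau>"
  shows "FF k \<tau> a b \<le> FF k \<tau> m b / 4"
proof -
  define K :: real where "K = 4^k"
  have K16: "K \<ge> 16"
  proof -
    have "(4::real)^2 \<le> 4^k" by (rule power_increasing) (use k in auto)
    then show ?thesis by (simp add: K_def)
  qed
  then have K4: "K \<ge> 4" by simp
  have "0 \<le> 4^k * a" using a by simp
  then have m0: "0 \<le> m" using am by linarith
  have aK: "a \<le> m / K" using am K4 by (simp add: K_def field_simps)
  have "FF k \<tau> a b \<le> FF k \<tau> (m / K) b" by (rule FF_mono) (use a aK b tau in auto)
  also have "\<dots> \<le> FF k \<tau> m b / 4"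
  proof -
    have KK: "K powr (1 / real k) = 4"
    proof -
      have "K = 4 powr real k" by (simp add: K_def powr_realpow)
      then have "K powr (1 / real k) = 4 powr (real k * (1 / real k))" by (simp add: powr_powr)
      also have "\<dots> = 4" using k by simp
      finally show ?thesis .
    qed
    have t1: "(m / K) * b powr (1 / real k) \<le> m * b powr (1 / real k) / 4"
    proof -
      have p: "0 \<le> m * b powr (1 / real k)" using m0 by simp
      have "(m / K) * b powr (1 / real k) = (m * b powr (1 / real k)) / K" by simp
      also have "\<dots> \<le> (m * b powr (1 / real k)) / 4" using K4 p by (intro divide_left_mono) auto
      finally show ?thesis .
    qed
    have t2: "b * (m / K) powr (1 / real k) = b * m powr (1 / real k) / 4"
      by (simp add: powr_divide KK)
    have sK: "sqrt K \<ge> 4"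
    proof -
      have "sqrt ((4::real)^2) \<le> sqrt K" using K16 by (intro real_sqrt_le_mono) simp
      then show ?thesis by simp
    qed
    have t3: "\<tau> * sqrt (m / K * b) \<le> \<tau> * sqrt (m * b) / 4"
    proof -
      have "sqrt (m / K * b) = sqrt (m * b) / sqrt K" by (simp add: real_sqrt_divide)
      also have "\<dots> \<le> sqrt (m * b) / 4" using sK m0 b K4 by (intro divide_left_mono) auto
      finally have "sqrt (m / K * b) \<le> sqrt (m * b) / 4" .
      then have "\<tau> * sqrt (m / K * b) \<le> \<tau> * (sqrt (m * b) / 4)" using tau by (rule mult_left_mono)
      then show ?thesis by simp
    qed
    show ?thesis unfolding FF_def add_divide_distrib using t1 t2 t3 by linarith
  qed
  finally show ?thesis .
qed

lemma sum_pow_ge: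
  fixes a b :: real
  assumes "0 \<le> a" "0 \<le> b" "k \<ge> 1"
  shows "a ^ k + b ^ k \<le> (a + b) ^ k"
  using assms(3)
proof (induction k rule: nat_induct_at_least)
  case base then show ?case by simp
next
  case (Suc j)
  have "a ^ Suc j + b ^ Suc j \<le> (a + b) * (a ^ j + b ^ j)"
    using assms by (simp add: algebra_simps)
  also have "\<dots> \<le> (a + b) * (a + b) ^ j" using Suc assms by (simp add: mult_left_mono)
  finally show ?case by simp
qed


lemma caseA_contra:
  fixes e m n t C0 a1 :: real
  assumes e: "e > 0" and m: "m > 0" and n: "n > 0" and t: "t \<ge> 0" and k: "k \<ge> 1"
    and C0: "C0 > 0" and big: "(C0\<^sup>2 / 4) ^ k \<ge> a1" 
    and gt: "e > C0 * (t powr (1 / (2 * real k)) * sqrt (m * n))"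
  shows "(e\<^sup>2 / (4 * m * n)) ^ k > a1 * t"
proof -
  define \<tau> where "\<tau> = t powr (1 / (2 * real k))"
  have tau0: "\<tau> \<ge> 0" by (simp add: \<tau>_def)
  have tk: "(\<tau>\<^sup>2) ^ k = t"
  proof -
    have "(\<tau>\<^sup>2) ^ k = \<tau> ^ (2*k)" by (simp add: power_mult)
    also have "\<dots> = t" unfolding \<tau>_def using root_pow[OF t, of "2*k"] k by simp
    finally show ?thesis .
  qed
  have g0: "0 \<le> C0 * (\<tau> * sqrt (m * n))" using C0 tau0 m n by simp
  have "(C0 * (\<tau> * sqrt (m * n)))\<^sup>2 < e\<^sup>2"
    using gt g0 unfolding \<tau>_def[symmetric] by (intro power_strict_mono) auto
  then have "C0\<^sup>2 * \<tau>\<^sup>2 * (m * n) < e\<^sup>2" using m n by (simp add: power_mult_distrib)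
  then have lt: "C0\<^sup>2 * \<tau>\<^sup>2 / 4 < e\<^sup>2 / (4 * m * n)" using m n by (simp add: field_simps)
  have "(C0\<^sup>2 * \<tau>\<^sup>2 / 4) ^ k < (e\<^sup>2 / (4 * m * n)) ^ k"
    using lt tau0 k by (intro power_strict_mono) auto
  moreover have "(C0\<^sup>2 * \<tau>\<^sup>2 / 4) ^ k = (C0\<^sup>2 / 4) ^ k * t"
    using tk by (simp add: power_mult_distrib power_divide)
  moreover have "a1 * t \<le> (C0\<^sup>2 / 4) ^ k * t" using big t by (simp add: mult_right_mono)
  ultimately show ?thesis by linarith
qed

lemma caseB_contra:
  fixes e m n C0 c3 :: real
  assumes e: "e > 0" and m: "m > 0" and n: "n > 0" and k: "k \<ge> 1"
    and C0: "C0 > 0" and big: "C0 ^ k \<ge> c3"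
    and le: "e ^ k \<le> c3 * (m * n ^ k + m ^ k * n)"
    and gt: "e > C0 * (m * n powr (1 / real k) + n * m powr (1 / real k))"
  shows False
proof -
  define G where "G = m * n powr (1 / real k) + n * m powr (1 / real k)"
  have G0: "G \<ge> 0" using m n by (simp add: G_def)
  have "(C0 * G) ^ k < e ^ k" using gt G0 C0 k unfolding G_def[symmetric]
    by (intro power_strict_mono) auto
  moreover have "(m * n powr (1 / real k)) ^ k + (n * m powr (1 / real k)) ^ k \<le> G ^ k"
    unfolding G_def by (rule sum_pow_ge) (use m n k in auto)
  moreover have "(m * n powr (1 / real k)) ^ k = m ^ k * n"
    using root_pow[of n k] n k by (simp add: power_mult_distrib)
  moreover have "(n * m powr (1 / real k)) ^ k = n ^ k * m"
    using root_pow[of m k] m k by (simp add: power_mult_distrib)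
  ultimately have "C0 ^ k * (m ^ k * n + n ^ k * m) < e ^ k"
    using C0 by (smt (verit) mult_left_mono power_mult_distrib zero_le_power)
  moreover have "c3 * (m * n ^ k + m ^ k * n) \<le> C0 ^ k * (m * n ^ k + m ^ k * n)"
    by (rule mult_right_mono[OF big]) (use m n in simp)
  moreover have "C0 ^ k * (m ^ k * n + n ^ k * m) = C0 ^ k * (m * n ^ k + m ^ k * n)"
    by (simp add: algebra_simps)
  ultimately show False using le by (simp add: ac_simps)
qed

lemma caseB_derive:
  fixes e m n K c :: real
  assumes e: "e > 0" and m: "m > 0" and n: "n > 0" and K: "K > 0" and c: "c \<ge> 0" and k: "k = Suc j"
    and h: "(e\<^sup>2 / (4 * m * n)) ^ k \<le> c * ((K * e / m) ^ (k-1) + (K * e / n) ^ (k-1)) * e"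
  shows "e ^ k \<le> c * K ^ (k-1) * 4 ^ k * (m * n ^ k + m ^ k * n)"
proof -
  have L: "(e\<^sup>2 / (4 * m * n)) ^ k = e ^ k * e ^ k / (4 ^ k * m ^ k * n ^ k)"
    by (simp add: power_divide power_mult_distrib flip: power_mult) (simp add: mult_2 power_add)
  have R: "c * ((K * e / m) ^ (k-1) + (K * e / n) ^ (k-1)) * e = c * K ^ j * e ^ k * (n ^ j + m ^ j) / (m ^ j * n ^ j)"
    using m n k by (simp add: power_divide power_mult_distrib field_simps)
  have "e ^ k * e ^ k / (4 ^ k * m ^ k * n ^ k) \<le> c * K ^ j * e ^ k * (n ^ j + m ^ j) / (m ^ j * n ^ j)"
    using h L R by simp
  then have "e ^ k * e ^ k * (m ^ j * n ^ j) \<le> c * K ^ j * e ^ k * (n ^ j + m ^ j) * (4 ^ k * m ^ k * n ^ k)"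
    using m n by (simp add: field_simps)
  then have "e ^ k * (e ^ k * (m ^ j * n ^ j)) \<le> e ^ k * (c * K ^ j * (n ^ j + m ^ j) * (4 ^ k * m ^ k * n ^ k))"
    by (simp add: ac_simps)
  then have "e ^ k * (m ^ j * n ^ j) \<le> c * K ^ j * (n ^ j + m ^ j) * (4 ^ k * m ^ k * n ^ k)"
    using e by (simp add: mult_le_cancel_left_pos)
  also have "\<dots> = (c * K ^ j * 4 ^ k * (m * n ^ k + m ^ k * n)) * (m ^ j * n ^ j)"
    using k by (simp add: algebra_simps)
  finally have "e ^ k * (m ^ j * n ^ j) \<le> (c * K ^ j * 4 ^ k * (m * n ^ k + m ^ k * n)) * (m ^ j * n ^ j)" .
  then show ?thesis using m n k by (simp add: mult_le_cancel_right)
qed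



definition cA :: "nat \<Rightarrow> real" where "cA k = 2 * real ((2*k)^(2*k))"
definition cB :: "nat \<Rightarrow> real" where "cB k = (8 * real k ^ 2) ^ k"
definition cK :: "nat \<Rightarrow> real" where "cK k = 4 ^ k"
definition c3 :: "nat \<Rightarrow> real" where "c3 k = 2 * cB k * cK k ^ (k-1) * 4 ^ k"
definition C0 :: "nat \<Rightarrow> real" where "C0 k = 2 + 2 * cA k + c3 k"

lemma consts_pos: "cA k \<ge> 0" "cB k \<ge> 0" "cK k > 0" "c3 k \<ge> 0" "C0 k \<ge> 2"
  by (auto simp: cA_def cB_def cK_def c3_def C0_def)

lemma C0_big1: "k \<ge> 1 \<Longrightarrow> C0 k ^ k \<ge> c3 k"
proof -
  assume k: "k \<ge> 1"
  have "C0 k ^ 1 \<le> C0 k ^ k" using consts_pos(5)[of k] k by (intro power_increasing) auto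
  then have "C0 k \<le> C0 k ^ k" by simp
  moreover have "c3 k \<le> C0 k" using consts_pos[of k] by (simp add: C0_def)
  ultimately show ?thesis by linarith
qed

lemma C0_big2: "k \<ge> 1 \<Longrightarrow> ((C0 k)\<^sup>2 / 4) ^ k \<ge> 2 * cA k"
proof -
  assume k: "k \<ge> 1"
  define x where "x = cA k"
  have x0: "x \<ge> 0" using consts_pos by (simp add: x_def)
  have "C0 k \<ge> 2 + 2 * x" using consts_pos[of k] by (simp add: C0_def x_def)
  then have "(C0 k)\<^sup>2 \<ge> (2 + 2 * x)\<^sup>2" using x0 by (intro power_mono) auto
  then have q: "(C0 k)\<^sup>2 / 4 \<ge> (1 + x)\<^sup>2" by (simp add: power2_eq_square field_simps)
  have q1: "(1 + x)\<^sup>2 \<ge> 1 + 2 * x" using x0 by (simp add: power2_eq_square algebra_simps)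
  have g1: "(C0 k)\<^sup>2 / 4 \<ge> 1" using q q1 x0 by linarith
  have "((C0 k)\<^sup>2 / 4) ^ 1 \<le> ((C0 k)\<^sup>2 / 4) ^ k" using g1 k by (intro power_increasing) auto
  then have "(C0 k)\<^sup>2 / 4 \<le> ((C0 k)\<^sup>2 / 4) ^ k" by simp
  then show ?thesis using q q1 x_def by linarith
qed

lemma ee_le_card: "finite X \<Longrightarrow> finite Y \<Longrightarrow> ee Es X Y \<le> card X * card Y"
proof -
  assume f: "finite X" "finite Y"
  have "card {p\<in>X\<times>Y. {fst p, snd p} \<in> Es} \<le> card (X \<times> Y)" by (rule card_mono) (use f in auto)
  then show ?thesis by (simp add: ee_def card_cartesian_product)
qed

lemma ee_split:
  assumes "finite X" "finite Y" "X1 \<subseteq> X" "Y1 \<subseteq> Y"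
  shows "ee Es X Y \<le> ee Es (X - X1) (Y - Y1) + ee Es X1 Y + ee Es X Y1"
proof -
  have "{p\<in>X\<times>Y. {fst p, snd p} \<in> Es} \<subseteq> {p\<in>(X - X1)\<times>(Y - Y1). {fst p, snd p} \<in> Es}
     \<union> {p\<in>X1\<times>Y. {fst p, snd p} \<in> Es} \<union> {p\<in>X\<times>Y1. {fst p, snd p} \<in> Es}"
    using assms by auto
  then have "ee Es X Y \<le> card ({p\<in>(X - X1)\<times>(Y - Y1). {fst p, snd p} \<in> Es}
     \<union> {p\<in>X1\<times>Y. {fst p, snd p} \<in> Es} \<union> {p\<in>X\<times>Y1. {fst p, snd p} \<in> Es})"
    unfolding ee_def using assms by (intro card_mono) (auto intro: finite_subset)
  also have "\<dots> \<le> card ({p\<in>(X - X1)\<times>(Y - Y1). {fst p, snd p} \<in> Es}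
     \<union> {p\<in>X1\<times>Y. {fst p, snd p} \<in> Es}) + card {p\<in>X\<times>Y1. {fst p, snd p} \<in> Es}"
    by (rule card_Un_le)
  also have "\<dots> \<le> ee Es (X - X1) (Y - Y1) + ee Es X1 Y + ee Es X Y1"
    unfolding ee_def using card_Un_le[of "{p\<in>(X - X1)\<times>(Y - Y1). {fst p, snd p} \<in> Es}" "{p\<in>X1\<times>Y. {fst p, snd p} \<in> Es}"]
    by simp
  finally show ?thesis .
qed

lemma dg_mono: "finite Y \<Longrightarrow> Y1 \<subseteq> Y \<Longrightarrow> dg Es Y1 x \<le> dg Es Y x"
  unfolding dg_def by (intro card_mono) auto

lemma high_small:
  fixes f :: "'a \<Rightarrow> real"
  assumes fin: "finite X" and f0: "\<And>x. f x \<ge> 0" and s: "(\<Sum>x\<in>X. f x) = e" and T: "T > 0"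
  shows "T * real (card {x\<in>X. f x > T * e}) \<le> 1"
proof -
  define H where "H = {x\<in>X. f x > T * e}"
  have finH: "finite H" using fin by (simp add: H_def)
  have e0: "e \<ge> 0" using s f0 by (metis sum_nonneg)
  show "T * real (card {x\<in>X. f x > T * e}) \<le> 1"
  proof (cases "e = 0")
    case True
    then have "\<forall>x\<in>X. f x = 0" using sum_nonneg_eq_0_iff[OF fin, of f] f0 s by simp
    then have "H = {}" using True by (auto simp: H_def)
    then have "card {x\<in>X. f x > T * e} = 0" unfolding H_def by (simp only: card.empty)
    then show ?thesis by simp
  next
    case False
    then have e0': "e > 0" using e0 by simp
    have "real (card H) * (T * e) \<le> (\<Sum>x\<in>H. f x)"
      using sum_mono[of H "\<lambda>_. T * e" f] by (simp add: H_def less_imp_le)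
    also have "\<dots> \<le> (\<Sum>x\<in>X. f x)" by (rule sum_mono2[OF fin]) (auto simp: H_def f0)
    finally have "(real (card H) * T) * e \<le> 1 * e" using s by (simp add: ac_simps)
    then have "real (card H) * T \<le> 1" using e0' by (simp only: mult_le_cancel_right_pos)
    then show ?thesis by (simp add: H_def mult.commute)
  qed
qed



lemma disj_main:
  fixes V :: "'a set"
  assumes finV: "finite V" and EV: "\<forall>e\<in>Es. e \<subseteq> V" and k: "k \<ge> 2"
  shows "X \<subseteq> V \<Longrightarrow> Y \<subseteq> V \<Longrightarrow> X \<inter> Y = {} \<Longrightarrow>
    real (ee Es X Y) \<le> C0 k * FF k (real (card (cycles_of_length V Es (2*k))) powr (1 / (2 * real k)))
        (real (card X)) (real (card Y))"
proof (induction "card X + card Y" arbitrary: X Y rule: less_induct)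
  case (less X Y)
  define t where "t = real (card (cycles_of_length V Es (2*k)))"
  define \<tau> where "\<tau> = t powr (1 / (2 * real k))"
  define C where "C = C0 k"
  define e where "e = real (ee Es X Y)"
  define m where "m = real (card X)"
  define n where "n = real (card Y)"
  define K where "K = cK k"
  have finX: "finite X" using less.prems(1) finV by (rule finite_subset)
  have finY: "finite Y" using less.prems(2) finV by (rule finite_subset)
  have t0: "t \<ge> 0" by (simp add: t_def)
  have tau0: "\<tau> \<ge> 0" by (simp add: \<tau>_def)
  have C2: "C \<ge> 2" using consts_pos by (simp add: C_def)
  have K16: "K \<ge> 16"
  proof -
    have "(4::real)^2 \<le> 4^k" by (rule power_increasing) (use k in auto)
    then show ?thesis by (simp add: K_def cK_def)
  qed
  have F0: "FF k \<tau> m n \<ge> 0" using tau0 by (intro FF_nonneg) (auto simp: m_def n_def)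
  show ?case
    unfolding t_def[symmetric] \<tau>_def[symmetric] C_def[symmetric] e_def[symmetric] m_def[symmetric] n_def[symmetric]
  proof (rule ccontr)
    assume "\<not> e \<le> C * FF k \<tau> m n"
    then have gt: "e > C * FF k \<tau> m n" by simp
    have CF0: "C * FF k \<tau> m n \<ge> 0" using C2 F0 by simp
    have e0: "e > 0" using gt CF0 by linarith
    have "e \<le> m * n" using ee_le_card[OF finX finY, of Es] by (simp add: e_def m_def n_def flip: of_nat_mult)
    then have mn0: "m * n > 0" using e0 by linarith
    have m0: "m > 0" and n0: "n > 0" using mn0 by (auto simp: m_def n_def zero_less_mult_iff)
    define Xh where "Xh = {x\<in>X. real (dg Es Y x) > (K / m) * e}"
    define Yh where "Yh = {y\<in>Y. real (dg Es X y) > (K / n) * e}"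
    have KXh: "(K / m) * real (card Xh) \<le> 1" unfolding Xh_def
      by (rule high_small[OF finX]) (use sum_dg1[OF finX finY, of Es] K16 m0 in \<open>auto simp: e_def\<close>)
    have KYh: "(K / n) * real (card Yh) \<le> 1" unfolding Yh_def
      by (rule high_small[OF finY]) (use sum_dg2[OF finX finY, of Es] K16 n0 in \<open>auto simp: e_def\<close>)
    have Xh4: "4^k * real (card Xh) \<le> m" using KXh m0 by (simp add: K_def cK_def field_simps)
    have Yh4: "4^k * real (card Yh) \<le> n" using KYh n0 by (simp add: K_def cK_def field_simps)
    have XhX: "Xh \<subseteq> X" and YhY: "Yh \<subseteq> Y" by (auto simp: Xh_def Yh_def)
    have cXh: "card Xh < card X"
    proof -
      have "real (card Xh) * 16 \<le> real (card Xh) * 4^k" using K16 by (intro mult_left_mono) (auto simp: K_def cK_def)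
      moreover have "real (card Xh) * 4^k \<le> m" using Xh4 by (simp add: mult.commute)
      ultimately have "real (card Xh) * 16 \<le> m" by linarith
      then show ?thesis using m0 by (simp add: m_def)
    qed
    have cYh: "card Yh < card Y"
    proof -
      have "real (card Yh) * 16 \<le> real (card Yh) * 4^k" using K16 by (intro mult_left_mono) (auto simp: K_def cK_def)
      moreover have "real (card Yh) * 4^k \<le> n" using Yh4 by (simp add: mult.commute)
      ultimately have "real (card Yh) * 16 \<le> n" by linarith
      then show ?thesis using n0 by (simp add: n_def)
    qed
    have IH1: "real (ee Es Xh Y) \<le> C * FF k \<tau> (real (card Xh)) n"
      using less.hyps[of Xh Y] cXh XhX less.prems unfolding C_def \<tau>_def t_def n_def by auto
    have IH2: "real (ee Es X Yh) \<le> C * FF k \<tau> m (real (card Yh))"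
      using less.hyps[of X Yh] cYh YhY less.prems unfolding C_def \<tau>_def t_def m_def by auto
    have S1: "FF k \<tau> (real (card Xh)) n \<le> FF k \<tau> m n / 4"
      by (rule FF_shrink[OF k _ Xh4]) (use n0 tau0 in auto)
    have S2: "FF k \<tau> m (real (card Yh)) \<le> FF k \<tau> m n / 4"
      using FF_shrink[OF k _ Yh4, of m \<tau>] m0 tau0 by (simp add: FF_sym)
    define X' where "X' = X - Xh"
    define Y' where "Y' = Y - Yh"
    define e' where "e' = real (ee Es X' Y')"
    have "e \<le> e' + real (ee Es Xh Y) + real (ee Es X Yh)"
      using ee_split[OF finX finY XhX YhY, of Es] by (simp add: e_def e'_def X'_def Y'_def flip: of_nat_add)
    moreover have "real (ee Es Xh Y) \<le> C * FF k \<tau> m n / 4"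
    proof -
      have "C * FF k \<tau> (real (card Xh)) n \<le> C * (FF k \<tau> m n / 4)" using S1 C2 by (intro mult_left_mono) auto
      then show ?thesis using IH1 by simp
    qed
    moreover have "real (ee Es X Yh) \<le> C * FF k \<tau> m n / 4"
    proof -
      have "C * FF k \<tau> m (real (card Yh)) \<le> C * (FF k \<tau> m n / 4)" using S2 C2 by (intro mult_left_mono) auto
      then show ?thesis using IH2 by simp
    qed
    ultimately have e'big: "e' \<ge> e / 2" using gt by linarith
    have e'0: "e' > 0" using e'big e0 by linarith
    have finX': "finite X'" and finY': "finite Y'" using finX finY by (auto simp: X'_def Y'_def)
    have "e' \<le> real (card X') * real (card Y')"
      using ee_le_card[OF finX' finY', of Es] by (simp add: e'_def flip: of_nat_mult)
    then have "real (card X') * real (card Y') > 0" using e'0 by linarith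
    then have cX': "card X' > 0" and cY': "card Y' > 0" by (auto simp: zero_less_mult_iff)
    have m'le: "real (card X') \<le> m" unfolding m_def X'_def using finX by (simp add: card_mono)
    have n'le: "real (card Y') \<le> n" unfolding n_def Y'_def using finY by (simp add: card_mono)
    have e'le: "e' \<le> e"
      unfolding e'_def e_def ee_def X'_def Y'_def using finX finY
      by (intro of_nat_mono card_mono) (auto intro: finite_subset)
    have BC: "((e')\<^sup>2 / (real (card X') * real (card Y'))) ^ k \<le>
        cA k * t + cB k * ((K / m * e) ^ (k-1) + (K / n * e) ^ (k-1)) * e'"
      unfolding e'_def cA_def cB_def t_def
    proof (rule bounded_case[OF finV EV _ _ k cX' cY'])
      show "X' \<union> Y' \<subseteq> V" using less.prems by (auto simp: X'_def Y'_def)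
      show "X' \<inter> Y' = {}" using less.prems by (auto simp: X'_def Y'_def)
      fix x assume "x \<in> X'"
      then show "real (dg Es Y' x) \<le> K / m * e"
        using dg_mono[OF finY, of Y' Es x] by (auto simp: X'_def Y'_def Xh_def)
    next
      fix y assume "y \<in> Y'"
      then show "real (dg Es X' y) \<le> K / n * e"
        using dg_mono[OF finX, of X' Es y] by (auto simp: X'_def Y'_def Yh_def)
    qed
    define Q where "Q = (e\<^sup>2 / (4 * m * n)) ^ k"
    define B where "B = cB k * ((K * e / m) ^ (k-1) + (K * e / n) ^ (k-1)) * e"
    have Qle: "Q \<le> ((e')\<^sup>2 / (real (card X') * real (card Y'))) ^ k"
      unfolding Q_def
    proof (rule power_mono)
      show "0 \<le> e\<^sup>2 / (4 * m * n)" using m0 n0 by simp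
      have "e\<^sup>2 / 4 \<le> (e')\<^sup>2"
      proof -
        have "(e / 2)\<^sup>2 \<le> (e')\<^sup>2" using e'big e0 by (intro power_mono) auto
        then show ?thesis by (simp add: power_divide)
      qed
      then have "e\<^sup>2 / (4 * m * n) \<le> (e')\<^sup>2 / (m * n)" using m0 n0 by (simp add: field_simps)
      also have "\<dots> \<le> (e')\<^sup>2 / (real (card X') * real (card Y'))"
        using cX' cY' m'le n'le by (intro divide_left_mono mult_mono) auto
      finally show "e\<^sup>2 / (4 * m * n) \<le> (e')\<^sup>2 / (real (card X') * real (card Y'))" .
    qed
    have B0: "cB k * ((K / m * e) ^ (k-1) + (K / n * e) ^ (k-1)) \<ge> 0"
      using consts_pos[of k] K16 m0 n0 e0 by simp
    have "cB k * ((K / m * e) ^ (k-1) + (K / n * e) ^ (k-1)) * e' \<le> B"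
      unfolding B_def using mult_left_mono[OF e'le B0] by (simp add: ac_simps)
    then have QB: "Q \<le> cA k * t + B" using Qle BC by linarith
    show False
    proof (cases "cA k * t \<ge> B")
      case True
      then have "Q \<le> (2 * cA k) * t" using QB by linarith
      moreover have "Q > (2 * cA k) * t"
        unfolding Q_def
      proof (rule caseA_contra[OF e0 m0 n0 t0 _ _ C0_big2])
        show "1 \<le> k" "1 \<le> k" "0 < C0 k" using k C2 by (auto simp: C_def)
        have "\<tau> * sqrt (m * n) \<le> FF k \<tau> m n" unfolding FF_def using m0 n0 by simp
        then have "C * (\<tau> * sqrt (m * n)) \<le> C * FF k \<tau> m n" using C2 by simp
        then show "C0 k * (t powr (1 / (2 * real k)) * sqrt (m * n)) < e"
          using gt by (simp add: C_def \<tau>_def)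
      qed
      ultimately show False by linarith
    next
      case False
      then have "Q \<le> (2 * cB k) * ((K * e / m) ^ (k-1) + (K * e / n) ^ (k-1)) * e"
        using QB by (simp add: B_def)
      moreover have K0: "K > 0" using K16 by simp
      moreover have c0: "2 * cB k \<ge> 0" using consts_pos[of k] by simp
      moreover have kS: "k = Suc (k-1)" using k by simp
      ultimately have "e ^ k \<le> (2 * cB k) * K ^ (k-1) * 4 ^ k * (m * n ^ k + m ^ k * n)"
        unfolding Q_def using caseB_derive[OF e0 m0 n0] by blast
      then have le3: "e ^ k \<le> c3 k * (m * n ^ k + m ^ k * n)" by (simp add: c3_def K_def)
      show False
      proof (rule caseB_contra[OF e0 m0 n0 _ _ C0_big1 le3])
        show "1 \<le> k" "1 \<le> k" "0 < C0 k" using k C2 by (auto simp: C_def)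
        have "m * n powr (1 / real k) + n * m powr (1 / real k) \<le> FF k \<tau> m n"
          unfolding FF_def using m0 n0 tau0 by simp
        then have "C * (m * n powr (1 / real k) + n * m powr (1 / real k)) \<le> C * FF k \<tau> m n"
          using C2 by simp
        then show "C0 k * (m * n powr (1 / real k) + n * m powr (1 / real k)) < e"
          using gt by (simp add: C_def)
      qed
    qed
  qed
qed



lemma card_sep:
  assumes fin: "finite S" and u: "u \<in> S" and v: "v \<in> S" and uv: "u \<noteq> v"
  shows "card {T\<in>Pow S. u \<in> T \<and> v \<notin> T} = 2 ^ (card S - 2)"
proof -
  have "bij_betw (\<lambda>T. T - {u}) {T\<in>Pow S. u \<in> T \<and> v \<notin> T} (Pow (S - {u, v}))"
  proof (rule bij_betw_byWitness[where f'="insert u"])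
    show "\<forall>T\<in>{T\<in>Pow S. u \<in> T \<and> v \<notin> T}. insert u (T - {u}) = T" by auto
    show "\<forall>T\<in>Pow (S - {u, v}). insert u T - {u} = T" by auto
    show "(\<lambda>T. T - {u}) ` {T\<in>Pow S. u \<in> T \<and> v \<notin> T} \<subseteq> Pow (S - {u, v})" by auto
    show "insert u ` Pow (S - {u, v}) \<subseteq> {T\<in>Pow S. u \<in> T \<and> v \<notin> T}" using u uv by auto
  qed
  then have "card {T\<in>Pow S. u \<in> T \<and> v \<notin> T} = card (Pow (S - {u, v}))" by (rule bij_betw_same_card)
  also have "\<dots> = 2 ^ card (S - {u, v})" using fin by (simp add: card_Pow)
  also have "card (S - {u, v}) = card S - 2" using fin u v uv by (simp add: card_Diff_subset)
  finally show ?thesis .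
qed

lemma ee_filter:
  "T \<subseteq> S \<Longrightarrow> {p\<in>{p\<in>S\<times>S. {fst p, snd p} \<in> Es}. fst p \<in> T \<and> snd p \<notin> T} = {p\<in>T\<times>(S-T). {fst p, snd p} \<in> Es}"
  by auto

lemma averaging:
  assumes fin: "finite S" and loops: "\<And>a. {a} \<notin> Es"
  shows "\<exists>T. T \<subseteq> S \<and> ee Es S S \<le> 4 * ee Es T (S - T)"
proof (rule ccontr)
  assume na: "\<not> ?thesis"
  define P where "P = {p\<in>S\<times>S. {fst p, snd p} \<in> Es}"
  have finP: "finite P" using fin by (simp add: P_def)
  have less: "4 * ee Es T (S - T) < card P" if "T \<in> Pow S" for T
    using na that by (auto simp: ee_def P_def)
  have Pne: "P \<noteq> {}" using less[of "{}"] by auto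
  then obtain p0 where p0: "p0 \<in> P" by blast
  have neq: "fst p \<noteq> snd p" if "p \<in> P" for p
    using that loops by (auto simp: P_def)
  have S2: "card S \<ge> 2"
  proof -
    have "{fst p0, snd p0} \<subseteq> S" using p0 by (auto simp: P_def)
    then have "card {fst p0, snd p0} \<le> card S" using fin by (rule card_mono[rotated])
    then show ?thesis using neq[OF p0] by simp
  qed
  have "(\<Sum>T\<in>Pow S. ee Es T (S - T)) = (\<Sum>T\<in>Pow S. \<Sum>p\<in>P. if fst p \<in> T \<and> snd p \<notin> T then 1 else 0)"
  proof (rule sum.cong[OF refl])
    fix T assume TS: "T \<in> Pow S"
    have "{p\<in>P. fst p \<in> T \<and> snd p \<notin> T} = {p\<in>T\<times>(S-T). {fst p, snd p} \<in> Es}"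
      unfolding P_def using TS by auto
    then have "ee Es T (S - T) = card {p\<in>P. fst p \<in> T \<and> snd p \<notin> T}"
      unfolding ee_def by simp
    also have "\<dots> = (\<Sum>p\<in>P. if fst p \<in> T \<and> snd p \<notin> T then 1 else 0)"
      using finP by (simp add: sum.If_cases Int_def conj_commute)
    finally show "ee Es T (S - T) = (\<Sum>p\<in>P. if fst p \<in> T \<and> snd p \<notin> T then 1 else 0)" .
  qed
  also have "\<dots> = (\<Sum>p\<in>P. \<Sum>T\<in>Pow S. if fst p \<in> T \<and> snd p \<notin> T then 1 else 0)" by (rule sum.swap)
  also have "\<dots> = (\<Sum>p\<in>P. card {T\<in>Pow S. fst p \<in> T \<and> snd p \<notin> T})"
    using fin by (intro sum.cong refl) (simp add: sum.If_cases Int_def conj_commute)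
  also have "\<dots> = (\<Sum>p\<in>P. 2 ^ (card S - 2))"
    by (intro sum.cong refl card_sep[OF fin]) (auto simp: P_def loops)
  also have "\<dots> = card P * 2 ^ (card S - 2)" by simp
  finally have sumeq: "(\<Sum>T\<in>Pow S. ee Es T (S - T)) = card P * 2 ^ (card S - 2)" .
  have "(\<Sum>T\<in>Pow S. 4 * ee Es T (S - T)) < (\<Sum>T\<in>Pow S. card P)"
    by (rule sum_strict_mono) (use fin less in auto)
  also have "\<dots> = 2 ^ card S * card P" using fin by (simp add: card_Pow)
  finally have "4 * (card P * 2 ^ (card S - 2)) < 2 ^ card S * card P"
    by (simp add: sumeq flip: sum_distrib_left)
  moreover have "(2::nat) ^ card S = 4 * 2 ^ (card S - 2)"
    using S2 by (metis le_add_diff_inverse power_add power2_eq_square numeral_Bit0 mult_2 numeral_times_numeral num_double)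
  ultimately show False by (simp add: ac_simps)
qed



lemma edges_le_ee:
  assumes "finite A" "finite B"
  shows "card (edges_between Es A B) \<le> ee Es A B"
proof -
  have "edges_between Es A B \<subseteq> (\<lambda>p. {fst p, snd p}) ` {p\<in>A\<times>B. {fst p, snd p} \<in> Es}"
  proof
    fix x assume "x \<in> edges_between Es A B"
    then obtain u v where uv: "u \<in> A" "v \<in> B" "x = {u,v}" "x \<in> Es" by (auto simp: edges_between_def)
    then show "x \<in> (\<lambda>p. {fst p, snd p}) ` {p\<in>A\<times>B. {fst p, snd p} \<in> Es}"
      by (intro image_eqI[where x="(u,v)"]) auto
  qed
  then have "card (edges_between Es A B) \<le> card ((\<lambda>p. {fst p, snd p}) ` {p\<in>A\<times>B. {fst p, snd p} \<in> Es})"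
    using assms by (intro card_mono) auto
  also have "\<dots> \<le> card {p\<in>A\<times>B. {fst p, snd p} \<in> Es}" by (rule card_image_le) (use assms in auto)
  finally show ?thesis by (simp add: ee_def)
qed

lemma ee_split2:
  assumes "finite A" "finite B"
  shows "ee Es A B \<le> ee Es (A - B) B + ee Es (A \<inter> B) (B - A) + ee Es (A \<inter> B) (A \<inter> B)"
proof -
  define P1 where "P1 = {p\<in>(A - B)\<times>B. {fst p, snd p} \<in> Es}"
  define P2 where "P2 = {p\<in>(A \<inter> B)\<times>(B - A). {fst p, snd p} \<in> Es}"
  define P3 where "P3 = {p\<in>(A \<inter> B)\<times>(A \<inter> B). {fst p, snd p} \<in> Es}"
  have "{p\<in>A\<times>B. {fst p, snd p} \<in> Es} \<subseteq> P1 \<union> P2 \<union> P3" by (auto simp: P1_def P2_def P3_def)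
  then have "ee Es A B \<le> card (P1 \<union> P2 \<union> P3)"
    unfolding ee_def using assms by (intro card_mono) (auto simp: P1_def P2_def P3_def)
  also have "\<dots> \<le> card (P1 \<union> P2) + card P3" by (rule card_Un_le)
  also have "\<dots> \<le> card P1 + card P2 + card P3" using card_Un_le[of P1 P2] by simp
  finally show ?thesis by (simp add: ee_def P1_def P2_def P3_def)
qed

theorem mainTheorem4:
  fixes k :: nat
  assumes "k \<ge> 2"
  shows "\<exists>C>0. \<forall>(V :: nat set) Es A B t.
    simple_graph V Es \<longrightarrow> A \<subseteq> V \<longrightarrow> B \<subseteq> V \<longrightarrow>
    t = card (cycles_of_length V Es (2 * k)) \<longrightarrow>
    real (card (edges_between Es A B)) \<le>
      C * (real (card A) * real (card B) powr (1 / real k)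
         + real (card B) * real (card A) powr (1 / real k)
         + real t powr (1 / (2 * real k)) * sqrt (real (card A) * real (card B)))"
proof (intro exI[where x="6 * C0 k"] conjI allI impI)
  show "0 < 6 * C0 k" using consts_pos(5)[of k] by simp
  fix V :: "nat set" and Es A B t
  assume sg: "simple_graph V Es" and AV: "A \<subseteq> V" and BV: "B \<subseteq> V"
    and t: "t = card (cycles_of_length V Es (2 * k))"
  have finV: "finite V" and EV: "\<forall>e\<in>Es. e \<subseteq> V" using sg by (auto simp: simple_graph_def)
  have loops: "{a} \<notin> Es" for a using sg by (auto simp: simple_graph_def)
  have finA: "finite A" using AV finV by (rule finite_subset)
  have finB: "finite B" using BV finV by (rule finite_subset)
  define \<tau> where "\<tau> = real t powr (1 / (2 * real k))"
  have tau0: "\<tau> \<ge> 0" by (simp add: \<tau>_def)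
  define F where "F = FF k \<tau> (real (card A)) (real (card B))"
  have C0: "C0 k \<ge> 0" using consts_pos(5)[of k] by simp
  have DM: "real (ee Es X Y) \<le> C0 k * FF k \<tau> (real (card X)) (real (card Y))"
    if "X \<subseteq> V" "Y \<subseteq> V" "X \<inter> Y = {}" for X Y
    using disj_main[OF finV EV assms that] by (simp add: \<tau>_def t)
  have Fb: "C0 k * FF k \<tau> (real (card X)) (real (card Y)) \<le> C0 k * F"
    if "card X \<le> card A" "card Y \<le> card B" for X Y :: "nat set"
    unfolding F_def using that tau0 C0 by (intro mult_left_mono FF_mono) auto
  define S where "S = A \<inter> B"
  have finS: "finite S" using finA by (simp add: S_def)
  obtain T where TS: "T \<subseteq> S" and avg: "ee Es S S \<le> 4 * ee Es T (S - T)"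
    using averaging[OF finS loops] by blast
  have b1: "real (ee Es (A - B) B) \<le> C0 k * F"
  proof -
    have "A - B \<subseteq> V" "(A - B) \<inter> B = {}" using AV by auto
    then have "real (ee Es (A - B) B) \<le> C0 k * FF k \<tau> (real (card (A - B))) (real (card B))"
      using DM[of "A - B" B] BV by simp
    moreover have "card (A - B) \<le> card A" using card_mono[OF finA, of "A - B"] by auto
    ultimately show ?thesis using Fb[of "A - B" B] by linarith
  qed
  have b2: "real (ee Es (A \<inter> B) (B - A)) \<le> C0 k * F"
  proof -
    have "A \<inter> B \<subseteq> V" "B - A \<subseteq> V" "(A \<inter> B) \<inter> (B - A) = {}" using AV BV by auto
    then have "real (ee Es (A \<inter> B) (B - A)) \<le> C0 k * FF k \<tau> (real (card (A \<inter> B))) (real (card (B - A)))"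
      using DM[of "A \<inter> B" "B - A"] by simp
    moreover have "card (A \<inter> B) \<le> card A" using card_mono[OF finA, of "A \<inter> B"] by auto
    moreover have "card (B - A) \<le> card B" using card_mono[OF finB, of "B - A"] by auto
    ultimately show ?thesis using Fb[of "A \<inter> B" "B - A"] by linarith
  qed
  have b3: "real (ee Es T (S - T)) \<le> C0 k * F"
  proof -
    have "card T \<le> card A" using card_mono[OF finA, of T] TS by (auto simp: S_def)
    moreover have "card (S - T) \<le> card B" using card_mono[OF finB, of "S - T"] by (auto simp: S_def)
    moreover have "T \<subseteq> V" "S - T \<subseteq> V" using TS AV by (auto simp: S_def)
    moreover have "T \<inter> (S - T) = {}" by auto
    ultimately have "real (ee Es T (S - T)) \<le> C0 k * FF k \<tau> (real (card T)) (real (card (S - T)))"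
      and "C0 k * FF k \<tau> (real (card T)) (real (card (S - T))) \<le> C0 k * F"
      using DM[of T "S - T"] Fb[of T "S - T"] by simp_all
    then show ?thesis by linarith
  qed
  have "real (card (edges_between Es A B)) \<le> real (ee Es A B)"
    using edges_le_ee[OF finA finB] by simp
  also have "\<dots> \<le> real (ee Es (A - B) B) + real (ee Es (A \<inter> B) (B - A)) + real (ee Es S S)"
    using ee_split2[OF finA finB, of Es] by (simp add: S_def flip: of_nat_add)
  also have "\<dots> \<le> C0 k * F + C0 k * F + 4 * (C0 k * F)"
  proof -
    have "real (ee Es S S) \<le> real (4 * ee Es T (S - T))" using avg by (simp only: of_nat_le_iff)
    then have "real (ee Es S S) \<le> 4 * real (ee Es T (S - T))" by simp
    then show ?thesis using b1 b2 b3 by linarith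
  qed
  also have "\<dots> = 6 * C0 k * F" by simp
  finally show "real (card (edges_between Es A B)) \<le> 6 * C0 k *
      (real (card A) * real (card B) powr (1 / real k)
         + real (card B) * real (card A) powr (1 / real k)
         + real t powr (1 / (2 * real k)) * sqrt (real (card A) * real (card B)))"
    by (simp add: F_def FF_def \<tau>_def)
qed

end
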